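(* Let $\varphi\in\mathcal M$, and suppose the elements of $$L(\underline\alpha,\underline h)=\{h_1\log p:p\in\mathbb{P}\}\cup\bigcup_{j=1}^r\{h_{2j}\log(m+\alpha_j):m\in\mathbb{N}_0\}\cup\{\pi\}$$ are linearly independent over $\mathbb Q$. Fix any $\widehat{\underline\omega}\in\underline\Omega$. Then for every $n\in\mathbb N$, the probability measures on $(\underline H,\mathcal B(\underline H))$ $$P_{N,n}(A)=\frac1{N+1}\#\{0\le k\le N:\underline Z_n(\underline s+ik\underline h,\underline\alpha;\underline{\mathfrak B})\in A\},$$ $$P_{N,n,\widehat{\underline\omega}}(A)=\frac1{N+1}\#\{0\le k\le N:\underline Z_n(\underline s+ik\underline h,\widehat{\underline\omega},\underline\alpha;\underline{\mathfrak B})\in A\}$$ both converge weakly, as $N\to\infty$, to the same probability measure $P_n$ on $(\underline H,\mathcal B(\underline H))$.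
   Context: Class $\mathcal M$. Let $\varphi(s)=\sum_{k\ge1}c_kk^{-s}$ ($\sigma>1$) be the shift $\widetilde\varphi(s+\alpha+\beta)$ of a polynomial Euler product $\widetilde\varphi(s)=\prod_m\prod_{j\le g(m)}(1-a_m^{(j)}p_m^{-sf(j,m)})^{-1}$, where $p_m$ is the $m$-th prime, $g(m)\le C_1p_m^\alpha$ and $|a_m^{(j)}|\le p_m^\beta$. Assume that for some $\tfrac12\le\sigma_0<1$: - $\varphi$ is meromorphic on $\sigma\ge\sigma_0$, with poles in a compact set disjoint from $\sigma=\sigma_0$; - $\varphi(\sigma+it)=O(|t|^{C_2})$ there; - $\int_0^T|\varphi(\sigma_0+it)|^2\,dt=O(T)$. The number $\sigma^*$ is the infimum of all $\sigma_1$ such that $\frac1{2T}\int_{-T}^T|\varphi(\sigma+it)|^2\,dt\sim\sum|c_m|^2m^{-2\sigma}$ for all $\sigma\ge\sigma_1$. Data. $r\ge1$, $l(j)\in\mathbb N$, $\lambda=\sum l(j)$, $\alpha_j\in(0,1)$, periodic sequences $\mathfrak B_{jl}=\{b_{mjl}\}_{m\ge0}$ (not all zero), and $h_1,h_{2j}>0$. Let $D_1\subset\{\sigma^*<\operatorname{Re}s<1\}$ and $D_2\subset\{\tfrac12<\operatorname{Re}s<1\}$ be open, and $\underline H=H(D_1)\times H(D_2)^\lambda$ with the topology of uniform convergence on compacta. For $\underline s=(s_1,s_{211},\dots,s_{2rl(r)})$, $\underline s+ik\underline h$ adds $ikh_1$ to $s_1$ and $ikh_{2j}$ to $s_{2jl}$.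 Torus. $\underline\Omega=\prod_{p\in\mathbb P}\gamma\times\prod_{j=1}^r\prod_{m\in\mathbb N_0}\gamma$ ($\gamma$ the unit circle), with elements $\underline\omega=(\omega_1,\omega_{21},\dots,\omega_{2r})$. The coordinates are $\omega_1(p)$ and $\omega_{2j}(m)$, with $\omega_1(m)=\prod\omega_1(p)^{a_p}$ for $m=\prod p^{a_p}$. Smoothed series. Fix $\sigma_0^*>\tfrac12$ and put $v_1(m,n)=\exp(-(m/n)^{\sigma_0^*})$ and $v_2(m,n,\alpha_j)=\exp(-((m+\alpha_j)/(n+\alpha_j))^{\sigma_0^*})$. Define $$\varphi_n(s)=\sum_{m\ge1}c_mv_1(m,n)m^{-s},\qquad \zeta_n(s,\alpha_j;\mathfrak B_{jl})=\sum_{m\ge0}b_{mjl}v_2(m,n,\alpha_j)(m+\alpha_j)^{-s},$$ $$\varphi_n(s,\omega_1)=\sum_{m\ge1}c_m\omega_1(m)v_1(m,n)m^{-s},\qquad \zeta_n(s,\alpha_j,\omega_{2j};\mathfrak B_{jl})=\sum_{m\ge0}b_{mjl}\omega_{2j}(m)v_2(m,n,\alpha_j)(m+\alpha_j)^{-s}.$$ These converge absolutely for $\operatorname{Re}s>\tfrac12$. Set $$\underline Z_n(\underline s,\underline\alpha;\underline{\mathfrak B})=(\varphi_n(s_1),\zeta_n(s_{211},\alpha_1;\mathfrak B_{11}),\dots,\zeta_n(s_{2rl(r)},\alpha_r;\mathfrak B_{rl(r)})),$$ and let $\underline Z_n(\underline s,\underline\omega,\underline\alpha;\underline{\mathfrak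 B})$ be the analogous tuple built from the $\omega$-twisted series. *)

theory Defs
  imports "HOL-Complex_Analysis.Complex_Analysis" "HOL-Probability.Probability"
    "HOL-Library.Landau_Symbols"
begin

text \<open>Euler-product part: the Dirichlet series with coefficients c (c 0 is irrelevant,
  its term vanishes) is, for Re s > 1, equal to F s and to the shifted polynomial Euler
  product.  Primes are used directly as indices instead of p_m (the m-th prime).\<close>

definition euler_product_shift ::
  "(nat \<Rightarrow> complex) \<Rightarrow> (complex \<Rightarrow> complex) \<Rightarrow> bool" where
  "euler_product_shift c F \<longleftrightarrow>
     (\<exists>(\<kappa>::real) (\<beta>::real) (C1::real) (g::nat \<Rightarrow> nat) (a::nat \<Rightarrow> nat \<Rightarrow> complex)
        (f::nat \<Rightarrow> nat \<Rightarrow> nat).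
        \<kappa> \<ge> 0 \<and> \<beta> \<ge> 0 \<and> C1 > 0 \<and>
        (\<forall>p. prime p \<longrightarrow> real (g p) \<le> C1 * real p powr \<kappa>) \<and>
        (\<forall>p j. prime p \<and> 1 \<le> j \<and> j \<le> g p \<longrightarrow> cmod (a p j) \<le> real p powr \<beta> \<and> f j p \<ge> 1) \<and>
        (\<forall>s. Re s > 1 \<longrightarrow>
           summable (\<lambda>k. norm (c k / of_nat k powr s)) \<and>
           (\<lambda>k. c k / of_nat k powr s) sums F s \<and>
           (\<lambda>p. if prime p then
                   (\<Prod>j\<in>{1..g p}. inverse (1 - a p j *
                        of_nat p powr (- (s + of_real (\<kappa> + \<beta>)) * of_nat (f j p))))
                 else 1) has_prod F s))"

definition classM ::
  "(nat \<Rightarrow> complex) \<Rightarrow> (complex \<Rightarrow> complex) \<Rightarrow> real \<Rightarrow> bool" where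
  "classM c F \<sigma>0 \<longleftrightarrow>
     euler_product_shift c F \<and> 1/2 \<le> \<sigma>0 \<and> \<sigma>0 < 1 \<and>
     F meromorphic_on {s. Re s \<ge> \<sigma>0} \<and>
     (\<exists>K. compact K \<and> (\<forall>z. Re z \<ge> \<sigma>0 \<and> is_pole F z \<longrightarrow> z \<in> K) \<and> (\<forall>z\<in>K. Re z \<noteq> \<sigma>0)) \<and>
     (\<exists>C2 C t0. \<forall>\<sigma> t. \<sigma> \<ge> \<sigma>0 \<and> \<bar>t\<bar> \<ge> t0 \<longrightarrow>
         cmod (F (Complex \<sigma> t)) \<le> C * \<bar>t\<bar> powr C2) \<and>
     (\<lambda>T. integral {0..T} (\<lambda>t. (cmod (F (Complex \<sigma>0 t)))\<^sup>2)) \<in> O[at_top](\<lambda>T. T)"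

definition mean_square_cond :: "(nat \<Rightarrow> complex) \<Rightarrow> (complex \<Rightarrow> complex) \<Rightarrow> real \<Rightarrow> bool" where
  "mean_square_cond c F \<sigma> \<longleftrightarrow>
     summable (\<lambda>m. (cmod (c m))\<^sup>2 / real m powr (2 * \<sigma>)) \<and>
     (\<lambda>T. integral {-T..T} (\<lambda>t. (cmod (F (Complex \<sigma> t)))\<^sup>2) / (2 * T))
        \<sim>[at_top] (\<lambda>T. \<Sum>m. (cmod (c m))\<^sup>2 / real m powr (2 * \<sigma>))"

definition sigma_star :: "(nat \<Rightarrow> complex) \<Rightarrow> (complex \<Rightarrow> complex) \<Rightarrow> real \<Rightarrow> real" where
  "sigma_star c F \<sigma>0 = Inf {\<sigma>1. \<sigma>1 \<ge> \<sigma>0 \<and> (\<forall>\<sigma>\<ge>\<sigma>1. mean_square_cond c F \<sigma>)}"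

definition Q_lin_indep :: "('i \<Rightarrow> real) \<Rightarrow> 'i set \<Rightarrow> bool" where
  "Q_lin_indep v I \<longleftrightarrow>
     (\<forall>S q. finite S \<and> S \<subseteq> I \<and> (\<Sum>i\<in>S. real_of_rat (q i) * v i) = 0 \<longrightarrow> (\<forall>i\<in>S. q i = 0))"

text \<open>The family L(alpha,h): index None is pi, Some (Inl p) is h1 log p (p prime),
  Some (Inr (j,m)) is h2 j log (m + alpha j) (1 \<le> j \<le> r, m \<ge> 0).\<close>

definition L_index :: "nat \<Rightarrow> (nat + nat \<times> nat) option set" where
  "L_index r = {None} \<union> Some ` Inl ` {p. prime p} \<union> Some ` Inr ` ({1..r} \<times> UNIV)"

definition L_fam :: "real \<Rightarrow> (nat \<Rightarrow> real) \<Rightarrow> (nat \<Rightarrow> real) \<Rightarrow> (nat + nat \<times> nat) option \<Rightarrow> real" where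
  "L_fam h1 h2 \<alpha> i = (case i of None \<Rightarrow> pi
                               | Some (Inl p) \<Rightarrow> h1 * ln (real p)
                               | Some (Inr (j, m)) \<Rightarrow> h2 j * ln (real m + \<alpha> j))"

definition v1 :: "real \<Rightarrow> nat \<Rightarrow> nat \<Rightarrow> real" where
  "v1 \<sigma>s m n = exp (- ((real m / real n) powr \<sigma>s))"

definition v2 :: "real \<Rightarrow> nat \<Rightarrow> nat \<Rightarrow> real \<Rightarrow> real" where
  "v2 \<sigma>s m n a = exp (- (((real m + a) / (real n + a)) powr \<sigma>s))"

definition omega_mult :: "(nat \<Rightarrow> complex) \<Rightarrow> nat \<Rightarrow> complex" where
  "omega_mult \<omega> m = (\<Prod>p\<in>prime_factors m. \<omega> p ^ multiplicity p m)"

definition phi_n_tw :: "real \<Rightarrow> (nat \<Rightarrow> complex) \<Rightarrow> nat \<Rightarrow> (nat \<Rightarrow> complex) \<Rightarrow> complex \<Rightarrow> complex" where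
  "phi_n_tw \<sigma>s c n \<omega> s = (\<Sum>k. let m = Suc k in
       c m * omega_mult \<omega> m * of_real (v1 \<sigma>s m n) * of_nat m powr (- s))"

definition zeta_n_tw :: "real \<Rightarrow> nat \<Rightarrow> real \<Rightarrow> (nat \<Rightarrow> complex) \<Rightarrow> (nat \<Rightarrow> complex) \<Rightarrow> complex \<Rightarrow> complex" where
  "zeta_n_tw \<sigma>s n a b \<omega> s = (\<Sum>m.
       b m * \<omega> m * of_real (v2 \<sigma>s m n a) * of_real (real m + a) powr (- s))"

definition phi_n :: "real \<Rightarrow> (nat \<Rightarrow> complex) \<Rightarrow> nat \<Rightarrow> complex \<Rightarrow> complex" where
  "phi_n \<sigma>s c n s = (\<Sum>k. let m = Suc k in c m * of_real (v1 \<sigma>s m n) * of_nat m powr (- s))"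

definition zeta_n :: "real \<Rightarrow> nat \<Rightarrow> real \<Rightarrow> (nat \<Rightarrow> complex) \<Rightarrow> complex \<Rightarrow> complex" where
  "zeta_n \<sigma>s n a b s = (\<Sum>m. b m * of_real (v2 \<sigma>s m n a) * of_real (real m + a) powr (- s))"

text \<open>Components are indexed by (0,0) (for D1) and by (j,l), 1 \<le> j \<le> r, 1 \<le> l \<le> l j
  (for D2).  An element is a function on indices; each component is holomorphic on its
  domain and normalised to 0 outside it; components at non-indices are 0.\<close>

definition H_idx :: "nat \<Rightarrow> (nat \<Rightarrow> nat) \<Rightarrow> (nat \<times> nat) set" where
  "H_idx r l = {(0,0)} \<union> {(j, i). 1 \<le> j \<and> j \<le> r \<and> 1 \<le> i \<and> i \<le> l j}"

definition H_dom :: "complex set \<Rightarrow> complex set \<Rightarrow> nat \<times> nat \<Rightarrow> complex set" where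
  "H_dom D1 D2 i = (if i = (0,0) then D1 else D2)"

definition H_carrier :: "nat \<Rightarrow> (nat \<Rightarrow> nat) \<Rightarrow> complex set \<Rightarrow> complex set
    \<Rightarrow> (nat \<times> nat \<Rightarrow> complex \<Rightarrow> complex) set" where
  "H_carrier r l D1 D2 = {f. (\<forall>i\<in>H_idx r l. f i holomorphic_on H_dom D1 D2 i \<and>
                                  (\<forall>z. z \<notin> H_dom D1 D2 i \<longrightarrow> f i z = 0)) \<and>
                              (\<forall>i. i \<notin> H_idx r l \<longrightarrow> f i = (\<lambda>_. 0))}"

text \<open>Topology of uniform convergence on compacta (in each component).\<close>
definition H_top :: "nat \<Rightarrow> (nat \<Rightarrow> nat) \<Rightarrow> complex set \<Rightarrow> complex set
    \<Rightarrow> (nat \<times> nat \<Rightarrow> complex \<Rightarrow> complex) topology" where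
  "H_top r l D1 D2 = topology (\<lambda>U. U \<subseteq> H_carrier r l D1 D2 \<and>
     (\<forall>f\<in>U. \<exists>K \<epsilon>. \<epsilon> > 0 \<and> (\<forall>i\<in>H_idx r l. compact (K i) \<and> K i \<subseteq> H_dom D1 D2 i) \<and>
        {g\<in>H_carrier r l D1 D2. \<forall>i\<in>H_idx r l. \<forall>z\<in>K i. dist (g i z) (f i z) < \<epsilon>} \<subseteq> U))"

definition borel_of :: "'a topology \<Rightarrow> 'a measure" where
  "borel_of X = sigma (topspace X) {U. openin X U}"

definition weak_conv_top :: "'a topology \<Rightarrow> (nat \<Rightarrow> 'a measure) \<Rightarrow> 'a measure \<Rightarrow> bool" where
  "weak_conv_top X \<mu> \<nu> \<longleftrightarrow>
     (\<forall>g. continuous_map X euclideanreal g \<and> (\<exists>B. \<forall>x\<in>topspace X. \<bar>g x\<bar> \<le> B) \<longrightarrow>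
        (\<lambda>N. integral\<^sup>L (\<mu> N) g) \<longlonglongrightarrow> integral\<^sup>L \<nu> g)"

definition empirical :: "'a topology \<Rightarrow> (nat \<Rightarrow> 'a) \<Rightarrow> nat \<Rightarrow> 'a measure" where
  "empirical X Z N = distr (measure_pmf (pmf_of_set {0..N})) (borel_of X) Z"

definition Zn_shift :: "real \<Rightarrow> (nat \<Rightarrow> complex) \<Rightarrow> (nat \<Rightarrow> real) \<Rightarrow> (nat \<Rightarrow> nat \<Rightarrow> nat \<Rightarrow> complex)
    \<Rightarrow> real \<Rightarrow> (nat \<Rightarrow> real) \<Rightarrow> nat \<Rightarrow> (nat \<Rightarrow> nat) \<Rightarrow> complex set \<Rightarrow> complex set
    \<Rightarrow> nat \<Rightarrow> nat \<Rightarrow> nat \<times> nat \<Rightarrow> complex \<Rightarrow> complex" where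
  "Zn_shift \<sigma>s c \<alpha> b h1 h2 r l D1 D2 n k i z =
     (if i = (0,0) then (if z \<in> D1 then phi_n \<sigma>s c n (z + \<i> * of_nat k * of_real h1) else 0)
      else if i \<in> H_idx r l then
        (if z \<in> D2 then zeta_n \<sigma>s n (\<alpha> (fst i)) (\<lambda>m. b m (fst i) (snd i))
                          (z + \<i> * of_nat k * of_real (h2 (fst i))) else 0)
      else 0)"

definition Zn_shift_tw :: "real \<Rightarrow> (nat \<Rightarrow> complex) \<Rightarrow> (nat \<Rightarrow> real) \<Rightarrow> (nat \<Rightarrow> nat \<Rightarrow> nat \<Rightarrow> complex)
    \<Rightarrow> real \<Rightarrow> (nat \<Rightarrow> real) \<Rightarrow> nat \<Rightarrow> (nat \<Rightarrow> nat) \<Rightarrow> complex set \<Rightarrow> complex set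
    \<Rightarrow> (nat \<Rightarrow> complex) \<Rightarrow> (nat \<Rightarrow> nat \<Rightarrow> complex)
    \<Rightarrow> nat \<Rightarrow> nat \<Rightarrow> nat \<times> nat \<Rightarrow> complex \<Rightarrow> complex" where
  "Zn_shift_tw \<sigma>s c \<alpha> b h1 h2 r l D1 D2 \<omega>1 \<omega>2 n k i z =
     (if i = (0,0) then (if z \<in> D1 then phi_n_tw \<sigma>s c n \<omega>1 (z + \<i> * of_nat k * of_real h1) else 0)
      else if i \<in> H_idx r l then
        (if z \<in> D2 then zeta_n_tw \<sigma>s n (\<alpha> (fst i)) (\<lambda>m. b m (fst i) (snd i)) (\<omega>2 (fst i))
                          (z + \<i> * of_nat k * of_real (h2 (fst i))) else 0)
      else 0)"

end

theory Submission
  imports Defs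
begin

type_synonym idx = "nat + nat \<times> nat"

definition ucirc :: "complex measure" where
  "ucirc = distr (restrict_space lborel {0..1::real}) borel (\<lambda>t. cis (2*pi*t))"

lemma prob_space_unit_interval: "prob_space (restrict_space lborel {0..1::real})"
  by (rule prob_space_restrict_space) auto

lemma cis_meas[measurable]: "(\<lambda>t::real. cis (2*pi*t)) \<in> borel_measurable borel"
  by (intro borel_measurable_continuous_onI continuous_intros)

lemma ucirc_prob: "prob_space ucirc"
  unfolding ucirc_def
  by (intro prob_space.prob_space_distr prob_space_unit_interval measurable_restrict_space1) simp

lemma sets_ucirc[simp]: "sets ucirc = sets borel"
  unfolding ucirc_def by simp

lemma space_ucirc[simp]: "space ucirc = UNIV"
  unfolding ucirc_def by simp

lemma integral_ucirc:
  fixes f :: "complex \<Rightarrow> complex"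
  assumes "continuous_on UNIV f"
  shows "integral\<^sup>L ucirc f = integral {0..1} (\<lambda>t. f (cis (2*pi*t)))"
proof -
  have fm: "f \<in> borel_measurable borel" using assms borel_measurable_continuous_onI by blast
  have c: "continuous_on {0..1::real} (\<lambda>t. f (cis (2*pi*t)))"
    by (rule continuous_on_compose2[OF assms]) (auto intro!: continuous_intros)
  have "integral\<^sup>L ucirc f = integral\<^sup>L (restrict_space lborel {0..1::real}) (\<lambda>t. f (cis (2*pi*t)))"
    unfolding ucirc_def
    by (rule integral_distr) (auto intro: measurable_restrict_space1 simp: fm)
  also have "\<dots> = (LINT t|lborel. indicator {0..1::real} t *\<^sub>R f (cis (2*pi*t)))"
    by (rule integral_restrict_space) simp
  also have "\<dots> = set_lebesgue_integral lborel {0..1} (\<lambda>t. f (cis (2*pi*t)))"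
    by (simp add: set_lebesgue_integral_def)
  also have "\<dots> = integral {0..1} (\<lambda>t. f (cis (2*pi*t)))"
    by (rule set_borel_integral_eq_integral(2))
       (use borel_integrable_compact[OF _ c] in \<open>auto simp: set_integrable_def\<close>)
  finally show ?thesis .
qed

lemma integral_cis_int:
  fixes k :: int assumes "k \<noteq> 0"
  shows "integral {0..1} (\<lambda>t. cis (2*pi*k*t)) = 0"
proof -
  define G where "G z = exp (\<i> * (2*pi*k) * z) / (\<i> * (2*pi*k))" for z :: complex
  define F where "F t = G (of_real t)" for t :: real
  have dG: "(G has_field_derivative exp (\<i> * (2*pi*k) * z)) (at z)" for z
    unfolding G_def using assms
    by (auto intro!: derivative_eq_intros simp: field_simps)
  have d: "(F has_vector_derivative cis (2*pi*k*t)) (at t within {0..1})" for t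
    unfolding F_def using has_vector_derivative_real_field[OF dG[of "of_real t"]]
    by (simp add: cis_conv_exp mult.commute mult.left_commute)
  have "((\<lambda>t. cis (2*pi*k*t)) has_integral F 1 - F 0) {0..1}"
    by (rule fundamental_theorem_of_calculus) (auto intro: d)
  moreover have "F 1 = F 0"
    unfolding F_def G_def using cis_multiple_2pi[of "of_int k"] by (simp add: cis_conv_exp[symmetric] mult.commute mult.left_commute)
  ultimately show ?thesis by (simp add: integral_unique)
qed

definition torus :: "idx set \<Rightarrow> (idx \<Rightarrow> complex) set" where
  "torus I = {\<omega>. \<forall>i. (i \<in> I \<longrightarrow> cmod (\<omega> i) = 1) \<and> (i \<notin> I \<longrightarrow> \<omega> i = 1)}"

definition cmeas :: "idx set \<Rightarrow> idx \<Rightarrow> complex measure" where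
  "cmeas I i = (if i \<in> I then ucirc else return borel 1)"

definition haar :: "idx set \<Rightarrow> (idx \<Rightarrow> complex) measure" where
  "haar I = PiM UNIV (cmeas I)"

lemma cmeas_prob: "prob_space (cmeas I i)"
  unfolding cmeas_def by (auto intro: ucirc_prob prob_space_return)

lemma sets_cmeas[simp]: "sets (cmeas I i) = sets borel"
  unfolding cmeas_def by auto

lemma space_cmeas[simp]: "space (cmeas I i) = UNIV"
  unfolding cmeas_def by auto

lemma pps: "product_prob_space (cmeas I)"
  unfolding product_prob_space_def product_prob_space_axioms_def product_sigma_finite_def
  using cmeas_prob prob_space_imp_sigma_finite by blast

lemma haar_prob: "prob_space (haar I)"
  unfolding haar_def by (intro prob_space_PiM cmeas_prob)

lemma sets_haar[simp]: "sets (haar I) = sets borel"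
proof -
  have "sets (haar I) = sets (PiM UNIV (\<lambda>i::idx. (borel :: complex measure)))"
    unfolding haar_def by (rule sets_PiM_cong) auto
  also have "\<dots> = sets borel" by (rule sets_PiM_equal_borel)
  finally show ?thesis .
qed

lemma space_haar[simp]: "space (haar I) = UNIV"
  using sets_haar[of I] by (metis sets_eq_imp_space_eq space_borel)

lemma AE_torus: "AE \<omega> in haar I. \<omega> \<in> torus I"
proof -
  have "AE \<omega> in haar I. (i \<in> I \<longrightarrow> cmod (\<omega> i) = 1) \<and> (i \<notin> I \<longrightarrow> \<omega> i = 1)" for i
  proof -
    have "AE x in cmeas I i. (i \<in> I \<longrightarrow> cmod x = 1) \<and> (i \<notin> I \<longrightarrow> x = 1)"
    proof (cases "i \<in> I")
      case True
      have "AE x in ucirc. cmod x = 1"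
      proof -
        have "AE t in restrict_space lborel {0..1::real}. cmod (cis (2*pi*t)) = 1" by simp
        then show ?thesis unfolding ucirc_def
          by (subst AE_distr_iff) (auto intro: measurable_restrict_space1)
      qed
      then show ?thesis using True unfolding cmeas_def by simp
    next
      case False
      then show ?thesis unfolding cmeas_def by (simp add: AE_return)
    qed
    then show ?thesis unfolding haar_def
      by (intro AE_PiM_component[where P="\<lambda>x. (i \<in> I \<longrightarrow> cmod x = 1) \<and> (i \<notin> I \<longrightarrow> x = 1)"]) (auto intro: cmeas_prob)
  qed
  then have "AE \<omega> in haar I. \<forall>i. (i \<in> I \<longrightarrow> cmod (\<omega> i) = 1) \<and> (i \<notin> I \<longrightarrow> \<omega> i = 1)"
    by (subst AE_all_countable) auto
  then show ?thesis by (simp add: torus_def)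
qed

lemma torus_PiE: "torus I = PiE UNIV (\<lambda>i. if i \<in> I then sphere 0 1 else {1})"
proof (rule set_eqI)
  fix x :: "idx \<Rightarrow> complex"
  have "x \<in> torus I \<longleftrightarrow> (\<forall>i. x i \<in> (if i \<in> I then sphere 0 1 else {1}))"
    unfolding torus_def by (simp add: mem_sphere)
  then show "x \<in> torus I \<longleftrightarrow> x \<in> PiE UNIV (\<lambda>i. if i \<in> I then sphere 0 1 else {1})"
    by (simp add: PiE_iff)
qed

lemma compact_torus: "compact (torus I)"
proof -
  have "compactin (product_topology (\<lambda>i. euclidean) UNIV) (PiE UNIV (\<lambda>i. if i \<in> I then sphere (0::complex) 1 else {1}))"
    by (subst compactin_PiE) (auto simp: compactin_euclidean_iff)
  then show ?thesis by (simp add: torus_PiE euclidean_product_topology compactin_euclidean_iff)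
qed

definition epow :: "int \<Rightarrow> complex \<Rightarrow> complex" where
  "epow k w = (if k \<ge> 0 then w ^ nat k else cnj w ^ nat (-k))"

lemma epow_0[simp]: "epow 0 w = 1" by (simp add: epow_def)

lemma cnj_unit: "cmod w = 1 \<Longrightarrow> cnj w = inverse w"
proof -
  assume "cmod w = 1"
  moreover have "w * cnj w = of_real ((cmod w)^2)" by (simp only: complex_mult_cnj cmod_power2)
  ultimately have "w * cnj w = 1" by simp
  then show ?thesis by (simp add: inverse_unique)
qed

lemma epow_powi: "cmod w = 1 \<Longrightarrow> epow k w = w powi k"
  unfolding epow_def power_int_def by (simp add: cnj_unit)

lemma epow_add: "cmod w = 1 \<Longrightarrow> epow (a + b) w = epow a w * epow b w"
proof -
  assume w: "cmod w = 1"
  then have "w \<noteq> 0" by auto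
  then have "w powi (a + b) = w powi a * w powi b" by (simp add: power_int_add)
  then show ?thesis using w by (simp add: epow_powi)
qed

lemma epow_mult: "epow k (w * v) = epow k w * epow k v"
  unfolding epow_def by (simp add: power_mult_distrib)

lemma epow_power: "epow k (w ^ m) = epow k w ^ m"
proof -
  have "(w ^ m) ^ a = (w ^ a) ^ m" for w :: complex and a
    by (simp add: mult.commute flip: power_mult)
  then show ?thesis unfolding epow_def by simp
qed

lemma norm_epow: "cmod w = 1 \<Longrightarrow> cmod (epow k w) = 1"
  unfolding epow_def by (simp add: norm_power)

lemma cnj_epow: "cnj (epow k w) = epow (-k) w"
  unfolding epow_def by auto

lemma epow_cis: "epow k (cis t) = cis (of_int k * t)"
proof (cases "k \<ge> 0")
  case True
  have "cis t ^ nat k = cis (real (nat k) * t)" by (rule Complex.DeMoivre)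
  then show ?thesis using True by (simp add: epow_def of_nat_nat)
next
  case False
  have "cis (-t) ^ nat (-k) = cis (real (nat (-k)) * (-t))" by (rule Complex.DeMoivre)
  then show ?thesis using False by (simp add: epow_def of_nat_nat cis_cnj)
qed

lemma continuous_epow[continuous_intros]: "continuous_on A (epow k)"
  unfolding epow_def by (cases "k \<ge> 0") (simp_all add: continuous_intros)

lemma epow_meas[measurable]: "epow k \<in> borel_measurable borel"
  by (intro borel_measurable_continuous_onI continuous_epow)

lemma epow_meas_cmeas[measurable]: "epow k \<in> borel_measurable (cmeas I i)"
  using measurable_cong_sets[OF sets_cmeas refl] epow_meas by blast

lemma AE_cmeas_norm: "AE x in cmeas I i. cmod x = 1"
proof (cases "i \<in> I")
  case True
  have "AE t in restrict_space lborel {0..1::real}. cmod (cis (2*pi*t)) = 1" by simp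
  then have "AE x in ucirc. cmod x = 1" unfolding ucirc_def
    by (subst AE_distr_iff) (auto intro: measurable_restrict_space1)
  then show ?thesis using True unfolding cmeas_def by simp
next
  case False
  then show ?thesis unfolding cmeas_def by (simp add: AE_return)
qed

lemma integrable_epow: "integrable (cmeas I i) (epow k)"
proof -
  interpret prob_space "cmeas I i" by (rule cmeas_prob)
  show ?thesis
  proof (rule integrable_const_bound[where B=1])
    show "AE x in cmeas I i. norm (epow k x) \<le> 1"
      using AE_cmeas_norm by eventually_elim (simp add: norm_epow)
  qed simp
qed

lemma integral_epow_ucirc: "k \<noteq> 0 \<Longrightarrow> integral\<^sup>L ucirc (epow k) = 0"
proof -
  assume k: "k \<noteq> 0"
  have "integral\<^sup>L ucirc (epow k) = integral {0..1} (\<lambda>t. epow k (cis (2*pi*t)))"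
    by (rule integral_ucirc) (rule continuous_epow)
  also have "\<dots> = integral {0..1} (\<lambda>t. cis (2*pi*k*t))"
    by (simp add: epow_cis mult.commute mult.left_commute)
  also have "\<dots> = 0" using integral_cis_int[OF k] .
  finally show ?thesis .
qed

definition supp :: "(idx \<Rightarrow> int) \<Rightarrow> idx set" where "supp n = {i. n i \<noteq> 0}"

definition adm :: "idx set \<Rightarrow> (idx \<Rightarrow> int) \<Rightarrow> bool" where
  "adm I n \<longleftrightarrow> finite (supp n) \<and> supp n \<subseteq> I"

definition chr :: "(idx \<Rightarrow> int) \<Rightarrow> (idx \<Rightarrow> complex) \<Rightarrow> complex" where
  "chr n \<omega> = (\<Prod>i\<in>supp n. epow (n i) (\<omega> i))"

lemma chr_ext: "finite S \<Longrightarrow> supp n \<subseteq> S \<Longrightarrow> chr n \<omega> = (\<Prod>i\<in>S. epow (n i) (\<omega> i))"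
  unfolding chr_def by (rule prod.mono_neutral_left) (auto simp: supp_def)

lemma chr_zero[simp]: "chr (\<lambda>_. 0) \<omega> = 1"
  by (simp add: chr_def supp_def)

lemma torus_norm: "\<omega> \<in> torus I \<Longrightarrow> i \<in> I \<Longrightarrow> cmod (\<omega> i) = 1"
  by (simp add: torus_def)

lemma adm_add: "adm I n \<Longrightarrow> adm I m \<Longrightarrow> adm I (\<lambda>i. n i + m i)"
proof -
  have "supp (\<lambda>i. n i + m i) \<subseteq> supp n \<union> supp m" by (auto simp: supp_def)
  then show "adm I n \<Longrightarrow> adm I m \<Longrightarrow> adm I (\<lambda>i. n i + m i)"
    unfolding adm_def by (meson finite_UnI finite_subset le_sup_iff subset_trans)
qed

lemma adm_uminus: "adm I n \<Longrightarrow> adm I (\<lambda>i. - n i)"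
  unfolding adm_def supp_def by auto

lemma chr_add:
  assumes "adm I n" "adm I m" "\<omega> \<in> torus I"
  shows "chr (\<lambda>i. n i + m i) \<omega> = chr n \<omega> * chr m \<omega>"
proof -
  define S where "S = supp n \<union> supp m"
  have fS: "finite S" "S \<subseteq> I" using assms unfolding S_def adm_def by auto
  have e0: "chr (\<lambda>i. n i + m i) \<omega> = (\<Prod>i\<in>S. epow (n i + m i) (\<omega> i))"
    by (rule chr_ext[OF fS(1)]) (auto simp: S_def supp_def)
  have e1: "chr n \<omega> = (\<Prod>i\<in>S. epow (n i) (\<omega> i))"
    by (rule chr_ext[OF fS(1)]) (simp add: S_def)
  have e2: "chr m \<omega> = (\<Prod>i\<in>S. epow (m i) (\<omega> i))"
    by (rule chr_ext[OF fS(1)]) (simp add: S_def)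
  have e3: "epow (n i + m i) (\<omega> i) = epow (n i) (\<omega> i) * epow (m i) (\<omega> i)" if "i \<in> S" for i
    using that fS(2) by (intro epow_add torus_norm[OF assms(3)]) auto
  have "(\<Prod>i\<in>S. epow (n i + m i) (\<omega> i)) = (\<Prod>i\<in>S. epow (n i) (\<omega> i) * epow (m i) (\<omega> i))"
    by (rule prod.cong[OF refl e3])
  then show ?thesis unfolding e0 e1 e2 prod.distrib .
qed

lemma cnj_chr:
  assumes "adm I n" "\<omega> \<in> torus I"
  shows "cnj (chr n \<omega>) = chr (\<lambda>i. - n i) \<omega>"
proof -
  have s: "supp (\<lambda>i. - n i) = supp n" by (simp add: supp_def)
  have e: "cnj (epow (n i) (\<omega> i)) = epow (- n i) (\<omega> i)" if "i \<in> supp n" for i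
    by (rule cnj_epow)
  have "cnj (chr n \<omega>) = (\<Prod>i\<in>supp n. cnj (epow (n i) (\<omega> i)))"
    unfolding chr_def by (rule cnj_prod)
  also have "\<dots> = (\<Prod>i\<in>supp n. epow (- n i) (\<omega> i))"
    by (rule prod.cong[OF refl e])
  finally show ?thesis unfolding chr_def s .
qed

lemma chr_shift: "chr n (\<lambda>i. \<theta> i * \<xi> i ^ k) = chr n \<theta> * chr n \<xi> ^ k"
  by (simp add: chr_def epow_mult epow_power prod.distrib prod_power_distrib)

lemma norm_chr: "adm I n \<Longrightarrow> \<omega> \<in> torus I \<Longrightarrow> cmod (chr n \<omega>) = 1"
  unfolding chr_def adm_def prod_norm[symmetric]
  by (intro prod.neutral ballI norm_epow) (auto simp: torus_def)

lemma continuous_chr[continuous_intros]: "continuous_on A (chr n)"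
  unfolding chr_def
  by (intro continuous_on_prod continuous_on_compose2[OF continuous_epow[of UNIV]]
      continuous_on_subset[OF continuous_on_product_coordinates]) auto

lemma chr_meas[measurable]: "chr n \<in> borel_measurable borel"
  by (intro borel_measurable_continuous_onI continuous_chr)

lemma integral_chr:
  assumes "adm I n" "n \<noteq> (\<lambda>_. 0)"
  shows "integral\<^sup>L (haar I) (chr n) = 0"
proof -
  interpret P: product_prob_space "cmeas I" UNIV by (rule pps)
  define J where "J = supp n"
  have J: "finite J" "J \<subseteq> I" using assms(1) by (auto simp: adm_def J_def)
  obtain i0 where i0: "n i0 \<noteq> 0" using assms(2) by auto
  then have i0J: "i0 \<in> J" by (simp add: J_def supp_def)
  define f where "f x = (\<Prod>i\<in>J. epow (n i) (x i))" for x :: "idx \<Rightarrow> complex"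
  have fm: "f \<in> borel_measurable (PiM J (cmeas I))"
    unfolding f_def
  proof (rule borel_measurable_prod)
    fix i assume "i \<in> J"
    then have "(\<lambda>x. x i) \<in> PiM J (cmeas I) \<rightarrow>\<^sub>M cmeas I i" by (rule measurable_component_singleton)
    from measurable_compose[OF this epow_meas_cmeas]
    show "(\<lambda>x. epow (n i) (x i)) \<in> borel_measurable (PiM J (cmeas I))" .
  qed
  have ce: "chr n x = f (restrict x J)" for x
    unfolding chr_def f_def J_def by (intro prod.cong) auto
  have "integral\<^sup>L (haar I) (chr n) = integral\<^sup>L (PiM UNIV (cmeas I)) (\<lambda>x. f (restrict x J))"
    unfolding haar_def ce ..
  also have "\<dots> = integral\<^sup>L (distr (PiM UNIV (cmeas I)) (PiM J (cmeas I)) (\<lambda>x. restrict x J)) f"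
    by (rule integral_distr[symmetric, OF measurable_restrict_subset[OF subset_UNIV] fm])
  also have "\<dots> = integral\<^sup>L (PiM J (cmeas I)) f"
    using P.distr_PiM_restrict_finite[OF J(1)] by simp
  also have "\<dots> = (\<Prod>i\<in>J. integral\<^sup>L (cmeas I i) (epow (n i)))"
    unfolding f_def
    by (rule P.product_integral_prod[OF J(1)])
       (rule integrable_epow)
  also have "\<dots> = 0"
  proof (rule prod_zero[OF J(1)], rule bexI[OF _ i0J])
    show "integral\<^sup>L (cmeas I i0) (epow (n i0)) = 0"
      using i0J J(2) i0 by (auto simp: cmeas_def intro!: integral_epow_ucirc)
  qed
  finally show ?thesis .
qed

definition cavg :: "(nat \<Rightarrow> 'a::real_normed_field) \<Rightarrow> nat \<Rightarrow> 'a" where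
  "cavg a N = (\<Sum>k\<in>{0..N}. a k) / of_nat (Suc N)"

lemma tendsto_inv_Suc: "(\<lambda>N. C / real (Suc N)) \<longlonglongrightarrow> 0"
proof (rule tendsto_divide_0[OF tendsto_const])
  show "filterlim (\<lambda>N. real (Suc N)) at_infinity sequentially"
    by (rule filterlim_at_top_imp_at_infinity, subst filterlim_sequentially_Suc)
       (rule filterlim_real_sequentially)
qed

lemma geom_avg:
  fixes z :: complex
  assumes "cmod z = 1" "z \<noteq> 1"
  shows "cavg (\<lambda>k. z ^ k) \<longlonglongrightarrow> 0"
proof (rule Lim_null_comparison)
  define C where "C = 2 / cmod (1 - z)"
  show "\<forall>\<^sub>F N in sequentially. norm (cavg (\<lambda>k. z ^ k) N) \<le> C / real (Suc N)"
  proof (intro always_eventually allI)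
    fix N
    have s: "(\<Sum>k\<in>{0..N}. z ^ k) = (1 - z ^ Suc N) / (1 - z)"
    proof -
      have "(\<Sum>k\<in>{0..N}. z ^ k) = (\<Sum>k<Suc N. z ^ k)" by (rule sum.cong) auto
      also have "\<dots> = (1 - z ^ Suc N) / (1 - z)"
        by (simp only: sum_gp_strict if_not_P[OF assms(2)])
      finally show ?thesis .
    qed
    have "cmod (1 - z ^ Suc N) \<le> 2"
      using norm_triangle_ineq4[of 1 "z ^ Suc N"] assms(1) by (simp add: norm_power norm_mult)
    then have "cmod (\<Sum>k\<in>{0..N}. z ^ k) \<le> C"
      unfolding s C_def using assms(2) by (simp add: norm_divide divide_right_mono)
    then show "norm (cavg (\<lambda>k. z ^ k) N) \<le> C / real (Suc N)"
      unfolding cavg_def norm_divide norm_of_nat by (rule divide_right_mono) auto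
  qed
  show "(\<lambda>N. C / real (Suc N)) \<longlonglongrightarrow> 0" by (rule tendsto_inv_Suc)
qed

definition pt :: "(idx \<Rightarrow> complex) \<Rightarrow> (idx \<Rightarrow> complex) \<Rightarrow> nat \<Rightarrow> idx \<Rightarrow> complex" where
  "pt \<theta> \<xi> k = (\<lambda>i. \<theta> i * \<xi> i ^ k)"

lemma pt_torus: "\<theta> \<in> torus I \<Longrightarrow> \<xi> \<in> torus I \<Longrightarrow> pt \<theta> \<xi> k \<in> torus I"
  unfolding torus_def pt_def by (auto simp: norm_mult norm_power)

definition nonres :: "idx set \<Rightarrow> (idx \<Rightarrow> complex) \<Rightarrow> bool" where
  "nonres I \<xi> \<longleftrightarrow> (\<forall>n. adm I n \<and> n \<noteq> (\<lambda>_. 0) \<longrightarrow> chr n \<xi> \<noteq> 1)"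

lemma weyl_chr:
  assumes "\<theta> \<in> torus I" "\<xi> \<in> torus I" "nonres I \<xi>" "adm I n"
  shows "cavg (\<lambda>k. chr n (pt \<theta> \<xi> k)) \<longlonglongrightarrow> integral\<^sup>L (haar I) (chr n)"
proof (cases "n = (\<lambda>_. 0)")
  case True
  interpret prob_space "haar I" by (rule haar_prob)
  have "cavg (\<lambda>k. chr n (pt \<theta> \<xi> k)) = (\<lambda>N. 1)"
    unfolding cavg_def True by (auto simp del: of_nat_Suc)
  moreover have "chr n = (\<lambda>_. 1)" using True by (intro ext) simp
  moreover have "prob UNIV = 1" using prob_space by simp
  ultimately show ?thesis by simp
next
  case False
  have z: "cmod (chr n \<xi>) = 1" "chr n \<xi> \<noteq> 1"
    using norm_chr[OF assms(4,2)] assms(3,4) False by (auto simp: nonres_def)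
  have "cavg (\<lambda>k. chr n (pt \<theta> \<xi> k)) = (\<lambda>N. chr n \<theta> * cavg (\<lambda>k. chr n \<xi> ^ k) N)"
    unfolding cavg_def pt_def chr_shift by (auto simp: sum_distrib_left)
  moreover have "(\<lambda>N. chr n \<theta> * cavg (\<lambda>k. chr n \<xi> ^ k) N) \<longlonglongrightarrow> chr n \<theta> * 0"
    by (intro tendsto_mult tendsto_const geom_avg z)
  ultimately show ?thesis using integral_chr[OF assms(4) False] by simp
qed

definition polys :: "idx set \<Rightarrow> ((idx \<Rightarrow> complex) \<Rightarrow> complex) set" where
  "polys I = {g. \<exists>F a. finite F \<and> (\<forall>n\<in>F. adm I n) \<and> g = (\<lambda>\<omega>. \<Sum>n\<in>F. a n * chr n \<omega>)}"

lemma polys_chr: "adm I n \<Longrightarrow> (\<lambda>\<omega>. c * chr n \<omega>) \<in> polys I"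
  unfolding polys_def by (rule CollectI, rule exI[of _ "{n}"], rule exI[of _ "\<lambda>_. c"]) auto

lemma polys_zero: "(\<lambda>\<omega>. 0) \<in> polys I"
  unfolding polys_def by (rule CollectI, rule exI[of _ "{}"]) auto

lemma polys_add:
  assumes "g \<in> polys I" "h \<in> polys I"
  shows "(\<lambda>\<omega>. g \<omega> + h \<omega>) \<in> polys I"
proof -
  obtain F a where F: "finite F" "\<forall>n\<in>F. adm I n" "g = (\<lambda>\<omega>. \<Sum>n\<in>F. a n * chr n \<omega>)"
    using assms(1) unfolding polys_def by blast
  obtain G b where G: "finite G" "\<forall>n\<in>G. adm I n" "h = (\<lambda>\<omega>. \<Sum>n\<in>G. b n * chr n \<omega>)"
    using assms(2) unfolding polys_def by blast
  define c where "c n = (if n \<in> F then a n else 0) + (if n \<in> G then b n else 0)" for n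
  have "(\<Sum>n\<in>F\<union>G. c n * chr n \<omega>) = g \<omega> + h \<omega>" for \<omega>
  proof -
    have "(\<Sum>n\<in>F\<union>G. c n * chr n \<omega>) =
        (\<Sum>n\<in>F\<union>G. (if n \<in> F then a n * chr n \<omega> else 0)) + (\<Sum>n\<in>F\<union>G. (if n \<in> G then b n * chr n \<omega> else 0))"
      unfolding sum.distrib[symmetric] by (rule sum.cong) (auto simp: c_def distrib_right)
    also have "\<dots> = (\<Sum>n\<in>(F\<union>G)\<inter>F. a n * chr n \<omega>) + (\<Sum>n\<in>(F\<union>G)\<inter>G. b n * chr n \<omega>)"
      using F(1) G(1) by (simp only: sum.inter_restrict[OF finite_UnI[OF F(1) G(1)]])
    also have "(F\<union>G)\<inter>F = F" by auto
    also have "(F\<union>G)\<inter>G = G" by auto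
    finally show ?thesis using F(3) G(3) by simp
  qed
  then show ?thesis unfolding polys_def using F G
    by (intro CollectI exI[of _ "F \<union> G"] exI[of _ c]) auto
qed

lemma polys_sum:
  assumes "finite A" "\<And>x. x \<in> A \<Longrightarrow> p x \<in> polys I"
  shows "(\<lambda>\<omega>. \<Sum>x\<in>A. p x \<omega>) \<in> polys I"
  using assms
proof (induction A rule: finite_induct)
  case empty then show ?case by (simp add: polys_zero)
next
  case (insert x A)
  then show ?case by (simp add: polys_add)
qed

lemma polys_cont: "g \<in> polys I \<Longrightarrow> continuous_on S g"
  unfolding polys_def by (auto intro!: continuous_intros)

lemma polys_meas: "g \<in> polys I \<Longrightarrow> g \<in> borel_measurable borel"
  using polys_cont borel_measurable_continuous_onI by blast

lemma polys_mult_torus: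
  assumes "g \<in> polys I" "h \<in> polys I"
  shows "\<exists>q\<in>polys I. \<forall>\<omega>\<in>torus I. q \<omega> = g \<omega> * h \<omega>"
proof -
  obtain F a where F: "finite F" "\<forall>n\<in>F. adm I n" "g = (\<lambda>\<omega>. \<Sum>n\<in>F. a n * chr n \<omega>)"
    using assms(1) unfolding polys_def by blast
  obtain G b where G: "finite G" "\<forall>n\<in>G. adm I n" "h = (\<lambda>\<omega>. \<Sum>n\<in>G. b n * chr n \<omega>)"
    using assms(2) unfolding polys_def by blast
  define p where "p = (\<lambda>(n,m) \<omega>. (a n * b m) * chr (\<lambda>i. n i + m i) \<omega>)"
  define q where "q \<omega> = (\<Sum>x\<in>F\<times>G. p x \<omega>)" for \<omega>
  have "q \<in> polys I"
    unfolding q_def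
  proof (rule polys_sum)
    show "finite (F \<times> G)" using F G by auto
    fix x assume "x \<in> F \<times> G"
    then obtain n m where x: "x = (n, m)" "n \<in> F" "m \<in> G" by auto
    then show "p x \<in> polys I"
      unfolding p_def using F G by (simp add: polys_chr adm_add)
  qed
  moreover have "q \<omega> = g \<omega> * h \<omega>" if "\<omega> \<in> torus I" for \<omega>
  proof -
    have "g \<omega> * h \<omega> = (\<Sum>n\<in>F. \<Sum>m\<in>G. (a n * chr n \<omega>) * (b m * chr m \<omega>))"
      unfolding F(3) G(3) by (rule sum_product)
    also have "\<dots> = (\<Sum>(n,m)\<in>F\<times>G. (a n * chr n \<omega>) * (b m * chr m \<omega>))"
      by (rule sum.cartesian_product)
    also have "\<dots> = q \<omega>"
      unfolding q_def
    proof (rule sum.cong[OF refl])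
      fix x assume "x \<in> F \<times> G"
      then obtain n m where x: "x = (n, m)" "n \<in> F" "m \<in> G" by auto
      then have "chr (\<lambda>i. n i + m i) \<omega> = chr n \<omega> * chr m \<omega>"
        using F G that by (intro chr_add) auto
      then show "(case x of (n, m) \<Rightarrow> a n * chr n \<omega> * (b m * chr m \<omega>)) = p x \<omega>"
        unfolding p_def x by simp
    qed
    finally show ?thesis by simp
  qed
  ultimately show ?thesis by blast
qed

lemma polys_cnj_torus:
  assumes "g \<in> polys I"
  shows "\<exists>q\<in>polys I. \<forall>\<omega>\<in>torus I. q \<omega> = cnj (g \<omega>)"
proof -
  obtain F a where F: "finite F" "\<forall>n\<in>F. adm I n" "g = (\<lambda>\<omega>. \<Sum>n\<in>F. a n * chr n \<omega>)"
    using assms(1) unfolding polys_def by blast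
  define q where "q \<omega> = (\<Sum>n\<in>F. cnj (a n) * chr (\<lambda>i. - n i) \<omega>)" for \<omega>
  have "q \<in> polys I"
    unfolding q_def using F by (intro polys_sum polys_chr adm_uminus) auto
  moreover have "q \<omega> = cnj (g \<omega>)" if "\<omega> \<in> torus I" for \<omega>
    unfolding q_def F(3) cnj_sum
  proof (rule sum.cong[OF refl])
    fix n assume "n \<in> F"
    then have "adm I n" using F(2) by blast
    then show "cnj (a n) * chr (\<lambda>i. - n i) \<omega> = cnj (a n * chr n \<omega>)"
      using cnj_chr[OF _ that] by simp
  qed
  ultimately show ?thesis by blast
qed

lemma polys_scale: "g \<in> polys I \<Longrightarrow> (\<lambda>\<omega>. c * g \<omega>) \<in> polys I"
proof -
  assume "g \<in> polys I"
  then obtain F a where F: "finite F" "\<forall>n\<in>F. adm I n" "g = (\<lambda>\<omega>. \<Sum>n\<in>F. a n * chr n \<omega>)"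
    unfolding polys_def by blast
  then show ?thesis unfolding polys_def
    by (intro CollectI exI[of _ F] exI[of _ "\<lambda>n. c * a n"]) (auto simp: sum_distrib_left mult.assoc)
qed

definition Rset :: "idx set \<Rightarrow> ((idx \<Rightarrow> complex) \<Rightarrow> real) set" where
  "Rset I = {f. \<exists>g\<in>polys I. \<forall>\<omega>\<in>torus I. f \<omega> = Re (g \<omega>)}"

lemma Re_mult_Re: "Re a * Re b = Re ((a * b + a * cnj b) / 2)"
  by (simp add: algebra_simps)

lemma Rset_mult:
  assumes "f1 \<in> Rset I" "f2 \<in> Rset I"
  shows "(\<lambda>x. f1 x * f2 x) \<in> Rset I"
proof -
  obtain g1 where g1: "g1 \<in> polys I" "\<forall>\<omega>\<in>torus I. f1 \<omega> = Re (g1 \<omega>)" using assms(1) unfolding Rset_def by blast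
  obtain g2 where g2: "g2 \<in> polys I" "\<forall>\<omega>\<in>torus I. f2 \<omega> = Re (g2 \<omega>)" using assms(2) unfolding Rset_def by blast
  obtain q1 where q1: "q1 \<in> polys I" "\<forall>\<omega>\<in>torus I. q1 \<omega> = g1 \<omega> * g2 \<omega>"
    using polys_mult_torus[OF g1(1) g2(1)] by blast
  obtain c2 where c2: "c2 \<in> polys I" "\<forall>\<omega>\<in>torus I. c2 \<omega> = cnj (g2 \<omega>)"
    using polys_cnj_torus[OF g2(1)] by blast
  obtain q2 where q2: "q2 \<in> polys I" "\<forall>\<omega>\<in>torus I. q2 \<omega> = g1 \<omega> * c2 \<omega>"
    using polys_mult_torus[OF g1(1) c2(1)] by blast
  define q where "q \<omega> = (1/2) * (q1 \<omega> + q2 \<omega>)" for \<omega>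
  have "q \<in> polys I" unfolding q_def by (intro polys_scale polys_add q1 q2)
  moreover have "f1 \<omega> * f2 \<omega> = Re (q \<omega>)" if "\<omega> \<in> torus I" for \<omega>
  proof -
    have "f1 \<omega> * f2 \<omega> = Re (g1 \<omega>) * Re (g2 \<omega>)" using that g1(2) g2(2) by simp
    also have "\<dots> = Re ((g1 \<omega> * g2 \<omega> + g1 \<omega> * cnj (g2 \<omega>)) / 2)" by (rule Re_mult_Re)
    also have "g1 \<omega> * g2 \<omega> + g1 \<omega> * cnj (g2 \<omega>) = q1 \<omega> + q2 \<omega>"
      using that q1(2) q2(2) c2(2) by simp
    also have "(q1 \<omega> + q2 \<omega>) / 2 = q \<omega>" unfolding q_def by simp
    finally show ?thesis .
  qed
  ultimately show ?thesis unfolding Rset_def by blast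
qed

lemma Rset_add:
  assumes "f1 \<in> Rset I" "f2 \<in> Rset I"
  shows "(\<lambda>x. f1 x + f2 x) \<in> Rset I"
proof -
  obtain g1 where g1: "g1 \<in> polys I" "\<forall>\<omega>\<in>torus I. f1 \<omega> = Re (g1 \<omega>)" using assms(1) unfolding Rset_def by blast
  obtain g2 where g2: "g2 \<in> polys I" "\<forall>\<omega>\<in>torus I. f2 \<omega> = Re (g2 \<omega>)" using assms(2) unfolding Rset_def by blast
  show ?thesis unfolding Rset_def
    by (rule CollectI, rule bexI[OF _ polys_add[OF g1(1) g2(1)]]) (use g1 g2 in simp)
qed

lemma Rset_const: "(\<lambda>x. c) \<in> Rset I"
proof -
  have p: "(\<lambda>\<omega>. of_real c * chr (\<lambda>_. 0) \<omega>) \<in> polys I"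
    by (rule polys_chr) (simp add: adm_def supp_def)
  show ?thesis unfolding Rset_def
    by (rule CollectI, rule bexI[OF _ p]) simp
qed

lemma Rset_cont: "f \<in> Rset I \<Longrightarrow> continuous_on (torus I) f"
proof -
  assume "f \<in> Rset I"
  then obtain g where g: "g \<in> polys I" "\<forall>\<omega>\<in>torus I. f \<omega> = Re (g \<omega>)" unfolding Rset_def by blast
  have "continuous_on (torus I) (\<lambda>\<omega>. Re (g \<omega>))"
    by (intro continuous_intros polys_cont[OF g(1)])
  then show ?thesis using g(2) continuous_on_cong by force
qed

definition unitv :: "idx \<Rightarrow> idx \<Rightarrow> int" where "unitv i = (\<lambda>j. if j = i then 1 else 0)"

lemma chr_unitv: "chr (unitv i) \<omega> = \<omega> i"
proof -
  have "supp (unitv i) = {i}" by (auto simp: supp_def unitv_def)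
  then show ?thesis by (simp add: chr_def unitv_def epow_def)
qed

lemma adm_unitv: "i \<in> I \<Longrightarrow> adm I (unitv i)"
proof -
  have "supp (unitv i) = {i}" by (auto simp: supp_def unitv_def)
  then show "i \<in> I \<Longrightarrow> adm I (unitv i)" by (simp add: adm_def)
qed

lemma Rset_sep:
  assumes "x \<in> torus I" "y \<in> torus I" "x \<noteq> y"
  shows "\<exists>f\<in>Rset I. f x \<noteq> f y"
proof -
  obtain i where i: "x i \<noteq> y i" using assms(3) by auto
  have iI: "i \<in> I"
  proof (rule ccontr)
    assume "i \<notin> I"
    then have "x i = 1" "y i = 1" using assms(1,2) by (auto simp: torus_def)
    with i show False by simp
  qed
  have p1: "(\<lambda>\<omega>. 1 * chr (unitv i) \<omega>) \<in> polys I" by (rule polys_chr[OF adm_unitv[OF iI]])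
  have p2: "(\<lambda>\<omega>. (- \<i>) * chr (unitv i) \<omega>) \<in> polys I" by (rule polys_chr[OF adm_unitv[OF iI]])
  have f1: "(\<lambda>\<omega>. Re (\<omega> i)) \<in> Rset I" unfolding Rset_def
    by (rule CollectI, rule bexI[OF _ p1]) (simp add: chr_unitv)
  have f2: "(\<lambda>\<omega>. Im (\<omega> i)) \<in> Rset I" unfolding Rset_def
    by (rule CollectI, rule bexI[OF _ p2]) (simp add: chr_unitv)
  show ?thesis
  proof (cases "Re (x i) = Re (y i)")
    case True
    then have "Im (x i) \<noteq> Im (y i)" using i complex_eqI by blast
    then show ?thesis using f2 by (intro bexI[OF _ f2]) simp
  next
    case False
    then show ?thesis by (intro bexI[OF _ f1]) simp
  qed
qed

lemma SW:
  assumes "continuous_on (torus I) f" "e > 0"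
  shows "\<exists>g\<in>polys I. \<forall>\<omega>\<in>torus I. \<bar>f \<omega> - Re (g \<omega>)\<bar> < e"
proof -
  have "\<exists>g. g \<in> Rset I \<and> (\<forall>x\<in>torus I. \<bar>f x - g x\<bar> < e)"
  proof (rule Stone_Weierstrass_HOL[of "torus I" "\<lambda>g. g \<in> Rset I" f e, OF compact_torus])
    show "\<And>c. (\<lambda>x. c) \<in> Rset I" by (rule Rset_const)
    show "\<And>f. f \<in> Rset I \<Longrightarrow> continuous_on (torus I) f" by (rule Rset_cont)
    show "\<And>f g. f \<in> Rset I \<and> g \<in> Rset I \<Longrightarrow> (\<lambda>x. f x + g x) \<in> Rset I"
      using Rset_add by blast
    show "\<And>f g. f \<in> Rset I \<and> g \<in> Rset I \<Longrightarrow> (\<lambda>x. f x * g x) \<in> Rset I"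
      using Rset_mult by blast
    show "\<And>x y. x \<in> torus I \<and> y \<in> torus I \<and> x \<noteq> y \<Longrightarrow> \<exists>f. f \<in> Rset I \<and> f x \<noteq> f y"
      using Rset_sep by blast
  qed (use assms in auto)
  then obtain g where g: "g \<in> Rset I" "\<forall>x\<in>torus I. \<bar>f x - g x\<bar> < e" by blast
  then obtain h where "h \<in> polys I" "\<forall>\<omega>\<in>torus I. g \<omega> = Re (h \<omega>)" unfolding Rset_def by blast
  then show ?thesis using g(2) by auto
qed

lemma integrable_chr: "adm I n \<Longrightarrow> integrable (haar I) (chr n)"
proof -
  assume a: "adm I n"
  interpret prob_space "haar I" by (rule haar_prob)
  show ?thesis
  proof (rule integrable_const_bound[where B=1])
    show "AE x in haar I. norm (chr n x) \<le> 1"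
      using AE_torus by eventually_elim (simp add: norm_chr[OF a])
  qed (simp add: measurable_cong_sets[OF sets_haar refl])
qed

lemma cavg_sum: "cavg (\<lambda>k. \<Sum>n\<in>F. a n * x n k) N = (\<Sum>n\<in>F. a n * cavg (x n) N)"
  unfolding cavg_def by (simp add: sum_distrib_left sum_divide_distrib sum.swap[of _ F] mult.assoc)

lemma weyl_polys:
  assumes "\<theta> \<in> torus I" "\<xi> \<in> torus I" "nonres I \<xi>" "g \<in> polys I"
  shows "cavg (\<lambda>k. g (pt \<theta> \<xi> k)) \<longlonglongrightarrow> integral\<^sup>L (haar I) g \<and> integrable (haar I) g"
proof -
  obtain F a where F: "finite F" "\<forall>n\<in>F. adm I n" "g = (\<lambda>\<omega>. \<Sum>n\<in>F. a n * chr n \<omega>)"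
    using assms(4) unfolding polys_def by blast
  have int: "integrable (haar I) g"
    unfolding F(3) using F(2) by (intro Bochner_Integration.integrable_sum Bochner_Integration.integrable_mult_right integrable_chr) auto
  have ig: "integral\<^sup>L (haar I) g = (\<Sum>n\<in>F. a n * integral\<^sup>L (haar I) (chr n))"
    unfolding F(3) using F(2)
    by (subst Bochner_Integration.integral_sum) (auto intro: Bochner_Integration.integrable_mult_right integrable_chr)
  have "cavg (\<lambda>k. g (pt \<theta> \<xi> k)) = (\<lambda>N. \<Sum>n\<in>F. a n * cavg (\<lambda>k. chr n (pt \<theta> \<xi> k)) N)"
    unfolding F(3) by (rule ext) (rule cavg_sum)
  moreover have "(\<lambda>N. \<Sum>n\<in>F. a n * cavg (\<lambda>k. chr n (pt \<theta> \<xi> k)) N) \<longlonglongrightarrow> (\<Sum>n\<in>F. a n * integral\<^sup>L (haar I) (chr n))"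
    using F(2) by (intro tendsto_sum tendsto_mult tendsto_const weyl_chr assms) auto
  ultimately show ?thesis using ig int by simp
qed

lemma Re_cavg: "Re (cavg x N) = cavg (\<lambda>k. Re (x k)) N"
  unfolding cavg_def by (simp add: Re_divide_of_nat del: of_nat_Suc)

lemma cavg_bound:
  fixes x :: "nat \<Rightarrow> real"
  assumes "\<And>k. \<bar>x k\<bar> \<le> e"
  shows "\<bar>cavg x N\<bar> \<le> e"
proof -
  have "\<bar>\<Sum>k\<in>{0..N}. x k\<bar> \<le> (\<Sum>k\<in>{0..N}. e)"
    by (rule order_trans[OF sum_abs]) (intro sum_mono assms)
  also have "\<dots> = real (Suc N) * e" by simp
  finally show ?thesis unfolding cavg_def by (simp add: field_simps del: of_nat_Suc)
qed

lemma cavg_diff: "cavg (\<lambda>k. x k - y k) N = cavg x N - cavg y N"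
  unfolding cavg_def by (simp add: sum_subtractf diff_divide_distrib)

theorem weyl:
  fixes f :: "(idx \<Rightarrow> complex) \<Rightarrow> real"
  assumes th: "\<theta> \<in> torus I" and xi: "\<xi> \<in> torus I" and nr: "nonres I \<xi>"
    and fm: "f \<in> borel_measurable borel" and fb: "\<And>\<omega>. \<bar>f \<omega>\<bar> \<le> B"
    and fc: "continuous_on (torus I) f"
  shows "cavg (\<lambda>k. f (pt \<theta> \<xi> k)) \<longlonglongrightarrow> integral\<^sup>L (haar I) f"
proof (rule LIMSEQ_I)
  interpret prob_space "haar I" by (rule haar_prob)
  fix r :: real assume r: "r > 0"
  define e where "e = r / 4"
  have e: "e > 0" using r by (simp add: e_def)
  obtain g where g: "g \<in> polys I" "\<forall>\<omega>\<in>torus I. \<bar>f \<omega> - Re (g \<omega>)\<bar> < e"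
    using SW[OF fc e] by blast
  from weyl_polys[OF th xi nr g(1)]
  have lim: "cavg (\<lambda>k. g (pt \<theta> \<xi> k)) \<longlonglongrightarrow> integral\<^sup>L (haar I) g" and ig: "integrable (haar I) g" by auto
  have "(\<lambda>N. Re (cavg (\<lambda>k. g (pt \<theta> \<xi> k)) N)) \<longlonglongrightarrow> Re (integral\<^sup>L (haar I) g)"
    by (rule tendsto_Re[OF lim])
  then have lim2: "(\<lambda>N. cavg (\<lambda>k. Re (g (pt \<theta> \<xi> k))) N) \<longlonglongrightarrow> integral\<^sup>L (haar I) (\<lambda>\<omega>. Re (g \<omega>))"
    using ig by (simp add: Re_cavg)
  then obtain no where no: "\<forall>N\<ge>no. norm (cavg (\<lambda>k. Re (g (pt \<theta> \<xi> k))) N - integral\<^sup>L (haar I) (\<lambda>\<omega>. Re (g \<omega>))) < e"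
    using LIMSEQ_D[OF lim2 e] by blast
  have fint: "integrable (haar I) f"
    by (rule integrable_const_bound[where B=B]) (auto simp: fb measurable_cong_sets[OF sets_haar refl] fm)
  have rgint: "integrable (haar I) (\<lambda>\<omega>. Re (g \<omega>))" using ig by simp
  have I1: "\<bar>integral\<^sup>L (haar I) f - integral\<^sup>L (haar I) (\<lambda>\<omega>. Re (g \<omega>))\<bar> \<le> e"
  proof -
    have "\<bar>integral\<^sup>L (haar I) f - integral\<^sup>L (haar I) (\<lambda>\<omega>. Re (g \<omega>))\<bar> = \<bar>integral\<^sup>L (haar I) (\<lambda>\<omega>. f \<omega> - Re (g \<omega>))\<bar>"
      by (simp add: Bochner_Integration.integral_diff[OF fint rgint])
    also have "\<dots> \<le> integral\<^sup>L (haar I) (\<lambda>\<omega>. \<bar>f \<omega> - Re (g \<omega>)\<bar>)"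
      using integral_norm_bound[of "haar I" "\<lambda>\<omega>. f \<omega> - Re (g \<omega>)"] by simp
    also have "\<dots> \<le> integral\<^sup>L (haar I) (\<lambda>\<omega>. e)"
    proof (rule integral_mono_AE)
      show "integrable (haar I) (\<lambda>\<omega>. \<bar>f \<omega> - Re (g \<omega>)\<bar>)"
        by (intro integrable_abs Bochner_Integration.integrable_diff fint rgint)
      show "AE x in haar I. \<bar>f x - Re (g x)\<bar> \<le> e"
        using AE_torus by eventually_elim (use g(2) in \<open>auto intro: less_imp_le\<close>)
    qed simp
    also have "\<dots> = e" by (simp add: prob_space[unfolded space_haar])
    finally show ?thesis .
  qed
  show "\<exists>no. \<forall>N\<ge>no. norm (cavg (\<lambda>k. f (pt \<theta> \<xi> k)) N - integral\<^sup>L (haar I) f) < r"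
  proof (intro exI allI impI)
    fix N assume N: "N \<ge> no"
    have A: "\<bar>cavg (\<lambda>k. f (pt \<theta> \<xi> k)) N - cavg (\<lambda>k. Re (g (pt \<theta> \<xi> k))) N\<bar> \<le> e"
      unfolding cavg_diff[symmetric]
      by (rule cavg_bound) (use g(2) pt_torus[OF th xi] in \<open>auto intro: less_imp_le\<close>)
    have B: "\<bar>cavg (\<lambda>k. Re (g (pt \<theta> \<xi> k))) N - integral\<^sup>L (haar I) (\<lambda>\<omega>. Re (g \<omega>))\<bar> < e"
      using no N by simp
    show "norm (cavg (\<lambda>k. f (pt \<theta> \<xi> k)) N - integral\<^sup>L (haar I) f) < r"
      using A B I1 e unfolding e_def real_norm_def by arith
  qed
qed

lemma exp_neg_bound:
  fixes y :: real assumes y: "y > 0" and K: "K > 0"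
  shows "exp (- y) \<le> (real K / y) ^ K"
proof -
  have "(y / K) ^ K \<le> (1 + y / K) ^ K"
    using y K by (intro power_mono) auto
  also have "\<dots> \<le> exp y" using y K by (intro exp_ge_one_plus_x_over_n_power_n) auto
  finally have *: "(y / K) ^ K \<le> exp y" .
  have pos: "(y / K) ^ K > 0" using y K by simp
  have "exp (- y) = 1 / exp y" by (simp add: exp_minus field_simps)
  also have "\<dots> \<le> 1 / (y / K) ^ K" using * pos by (intro divide_left_mono) auto
  also have "\<dots> = (real K / y) ^ K" by (simp add: power_divide)
  finally show ?thesis .
qed

lemma summable_decay:
  fixes a d s A :: real
  assumes a: "a > 0" and d: "d > 0" and s: "s > 0"
  shows "summable (\<lambda>k. (real k + a) powr A * exp (- (((real k + a) / d) powr s)))"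
proof -
  obtain n :: nat where n: "(A + 2) / s < real n" using reals_Archimedean2 by blast
  define K where "K = Suc n"
  have K: "real K > (A + 2) / s" "K > 0" using n by (auto simp: K_def)
  have sK: "s * K \<ge> A + 2" using K(1) s by (simp add: field_simps)
  define C where "C = real K ^ K * d powr (s * K)"
  have Cpos: "C \<ge> 0" unfolding C_def by simp
  have bound: "norm ((real k + a) powr A * exp (- (((real k + a) / d) powr s))) \<le> C * real k powr (-2)"
    if k: "k \<ge> 1" for k
  proof -
    define x where "x = real k + a"
    have x: "x > 0" "x \<ge> real k" "x \<ge> 1" using a k by (auto simp: x_def)
    define y where "y = (x / d) powr s"
    have y: "y > 0" using x d by (simp add: y_def)
    have yK: "y ^ K = x powr (s * K) / d powr (s * K)"
      unfolding y_def using x d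
      by (simp add: powr_realpow[symmetric] powr_powr powr_divide)
    have "exp (- y) \<le> (real K / y) ^ K" by (rule exp_neg_bound[OF y K(2)])
    also have "\<dots> = C / x powr (s * K)"
      unfolding C_def power_divide yK using x d by (simp add: field_simps)
    finally have e: "exp (- y) \<le> C / x powr (s * K)" .
    have "norm (x powr A * exp (- y)) = x powr A * exp (- y)" by simp
    also have "\<dots> \<le> x powr A * (C / x powr (s * K))"
      by (intro mult_left_mono e) simp
    also have "\<dots> = C * x powr (A - s * K)"
      using x by (simp add: powr_diff field_simps)
    also have "\<dots> \<le> C * x powr (-2)"
      using sK x by (intro mult_left_mono Cpos powr_mono) auto
    also have "\<dots> \<le> C * real k powr (-2)"
      using x k by (intro mult_left_mono Cpos powr_mono2') auto
    finally show ?thesis unfolding x_def y_def .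
  qed
  have "summable (\<lambda>k. C * real k powr (-2))"
    by (intro summable_mult) (simp add: summable_real_powr_iff)
  then show ?thesis
    by (rule summable_comparison_test'[where N=1]) (use bound in auto)
qed

definition dser :: "(nat \<Rightarrow> complex) \<Rightarrow> (nat \<Rightarrow> real) \<Rightarrow> (nat \<Rightarrow> complex) \<Rightarrow> complex \<Rightarrow> complex" where
  "dser A lam w s = (\<Sum>m. A m * w m * of_real (lam m) powr (-s))"

definition MB :: "(nat \<Rightarrow> complex) \<Rightarrow> (nat \<Rightarrow> real) \<Rightarrow> real \<Rightarrow> nat \<Rightarrow> real" where
  "MB A lam R m = cmod (A m) * (lam m powr R + lam m powr (-R))"

lemma norm_lam_powr:
  assumes "x > 0" "\<bar>Re s\<bar> \<le> R"
  shows "cmod (of_real x powr (-s)) \<le> x powr R + x powr (-R)"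
proof -
  have n: "cmod (of_real x powr (-s)) = x powr (- Re s)"
    using assms(1) by (subst norm_powr_real_powr) auto
  show ?thesis
  proof (cases "x \<ge> 1")
    case True
    then have "x powr (- Re s) \<le> x powr R" using assms(2) by (intro powr_mono) auto
    then show ?thesis using n by (simp add: add_increasing2)
  next
    case False
    then have "x powr (- Re s) \<le> x powr (-R)" using assms by (intro powr_mono') auto
    then show ?thesis using n by (simp add: add_increasing)
  qed
qed

lemma term_bound:
  assumes "lam m > 0" "cmod w \<le> 1" "\<bar>Re s\<bar> \<le> R"
  shows "cmod (A m * w * of_real (lam m) powr (-s)) \<le> MB A lam R m"
proof -
  have "cmod (A m * w * of_real (lam m) powr (-s)) = cmod (A m) * cmod w * cmod (of_real (lam m) powr (-s))"
    by (simp add: norm_mult)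
  also have "\<dots> \<le> cmod (A m) * 1 * (lam m powr R + lam m powr (-R))"
    using assms by (intro mult_mono norm_lam_powr) auto
  finally show ?thesis by (simp add: MB_def)
qed

lemma MB_summable:
  assumes "\<And>\<sigma>. summable (\<lambda>m. cmod (A m) * lam m powr \<sigma>)"
  shows "summable (MB A lam R)"
  unfolding MB_def distrib_left using assms by (intro summable_add) auto

lemma MB_nonneg: "MB A lam R m \<ge> 0"
  by (simp add: MB_def)

lemma dser_holo:
  assumes lam: "\<And>m. lam m > 0" and summ: "\<And>\<sigma>. summable (\<lambda>m. cmod (A m) * lam m powr \<sigma>)"
    and w: "\<And>m. cmod (w m) \<le> 1"
  shows "dser A lam w holomorphic_on UNIV"
proof -
  define f where "f m s = A m * w m * of_real (lam m) powr (-s)" for m s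
  define f' where "f' m s = A m * w m * ((Ln (of_real (lam m)) * of_real (lam m) powr (-s)) * (-1))" for m s
  have d: "(f m has_field_derivative f' m x) (at x)" for m x
  proof -
    have ne: "(of_real (lam m) :: complex) \<noteq> 0" using lam[of m] by simp
    have "((\<lambda>s. of_real (lam m) powr (-s)) has_field_derivative
            (Ln (of_real (lam m)) * of_real (lam m) powr (-x)) * (-1)) (at x)"
      by (rule DERIV_chain2[OF has_field_derivative_powr_right[OF ne]])
         (auto intro!: derivative_eq_intros)
    then show ?thesis unfolding f_def f'_def by (rule DERIV_cmult)
  qed
  have loc: "\<exists>d h. 0 < d \<and> summable h \<and> (\<forall>\<^sub>F n in sequentially. \<forall>y\<in>ball x d \<inter> UNIV. cmod (f n y) \<le> h n)" for x
  proof (intro exI conjI)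
    show "summable (MB A lam (\<bar>Re x\<bar> + 1))" by (rule MB_summable[OF summ])
    show "\<forall>\<^sub>F n in sequentially. \<forall>y\<in>ball x 1 \<inter> UNIV. cmod (f n y) \<le> MB A lam (\<bar>Re x\<bar> + 1) n"
    proof (intro always_eventually allI ballI)
      fix n y assume y: "y \<in> ball x 1 \<inter> UNIV"
      have "\<bar>Re y - Re x\<bar> \<le> cmod (y - x)" by (metis abs_Re_le_cmod minus_complex.simps(1))
      also have "\<dots> < 1" using y by (simp add: dist_norm norm_minus_commute)
      finally have "\<bar>Re y\<bar> \<le> \<bar>Re x\<bar> + 1" by linarith
      then show "cmod (f n y) \<le> MB A lam (\<bar>Re x\<bar> + 1) n"
        unfolding f_def by (intro term_bound lam w)
    qed
  qed simp
  have "\<exists>g g'. \<forall>x\<in>UNIV. (\<lambda>n. f n x) sums g x \<and> (\<lambda>n. f' n x) sums g' x \<and> (g has_field_derivative g' x) (at x)"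
    by (rule series_and_derivative_comparison_local[OF open_UNIV]) (use d loc in auto)
  then obtain g g' where g: "\<And>x. (\<lambda>n. f n x) sums g x" "\<And>x. (g has_field_derivative g' x) (at x)"
    by blast
  have "dser A lam w = g"
    by (rule ext) (use g(1) in \<open>auto simp: dser_def f_def sums_iff\<close>)
  moreover have "g holomorphic_on UNIV"
    unfolding holomorphic_on_def field_differentiable_def using g(2) has_field_derivative_at_within by blast
  ultimately show ?thesis by simp
qed

lemma dser_summable:
  assumes lam: "\<And>m. lam m > 0" and summ: "\<And>\<sigma>. summable (\<lambda>m. cmod (A m) * lam m powr \<sigma>)"
    and w: "\<And>m. cmod (w m) \<le> 1"
  shows "summable (\<lambda>m. A m * w m * of_real (lam m) powr (-s))"
proof (rule summable_comparison_test'[where N=0])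
  show "summable (MB A lam \<bar>Re s\<bar>)" by (rule MB_summable[OF summ])
  show "norm (A m * w m * of_real (lam m) powr (-s)) \<le> MB A lam \<bar>Re s\<bar> m" for m
    by (intro term_bound lam w) simp
qed

lemma dser_cont:
  fixes W :: "nat \<Rightarrow> 'x::topological_space \<Rightarrow> complex"
  assumes lam: "\<And>m. lam m > 0" and summ: "\<And>\<sigma>. summable (\<lambda>m. cmod (A m) * lam m powr \<sigma>)"
    and W: "\<And>\<omega> m. \<omega> \<in> T \<Longrightarrow> cmod (W m \<omega>) \<le> 1"
    and Wc: "\<And>m. continuous_on UNIV (W m)"
    and \<omega>0: "\<omega>0 \<in> T" and K: "compact K" and e: "e > 0"
  shows "\<exists>V. open V \<and> \<omega>0 \<in> V \<and>
     (\<forall>\<omega>\<in>V \<inter> T. \<forall>z\<in>K. cmod (dser A lam (\<lambda>m. W m \<omega>) z - dser A lam (\<lambda>m. W m \<omega>0) z) < e)"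
proof -
  obtain R where R: "\<And>z. z \<in> K \<Longrightarrow> \<bar>Re z\<bar> \<le> R"
    using compact_imp_bounded[OF K] unfolding bounded_iff by (meson abs_Re_le_cmod order_trans)
  define M where "M = MB A lam R"
  have Ms: "summable M" unfolding M_def by (rule MB_summable[OF summ])
  have M0: "\<And>m. M m \<ge> 0" by (simp add: M_def MB_nonneg)
  obtain N where N: "norm (\<Sum>i. M (i + N)) < e / 4"
    using suminf_exist_split[of "e/4" M] e Ms by auto
  define SN where "SN = (\<Sum>m<N. M m)"
  have SN0: "SN \<ge> 0" unfolding SN_def by (intro sum_nonneg M0)
  define \<delta> where "\<delta> = e / (2 * (SN + 1))"
  have \<delta>: "\<delta> > 0" using e SN0 by (simp add: \<delta>_def)
  define V where "V = (\<Inter>m\<in>{..<N}. W m -` ball (W m \<omega>0) \<delta>)"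
  have "open V" unfolding V_def by (intro open_INT finite_lessThan ballI open_vimage Wc open_ball)
  moreover have "\<omega>0 \<in> V" unfolding V_def using \<delta> by auto
  moreover have "cmod (dser A lam (\<lambda>m. W m \<omega>) z - dser A lam (\<lambda>m. W m \<omega>0) z) < e"
    if \<omega>: "\<omega> \<in> V \<inter> T" and z: "z \<in> K" for \<omega> z
  proof -
    define d where "d m = A m * (W m \<omega> - W m \<omega>0) * of_real (lam m) powr (-z)" for m
    have s1: "summable (\<lambda>m. A m * W m \<omega> * of_real (lam m) powr (-z))"
      by (rule dser_summable[OF lam summ]) (use W \<omega> in auto)
    have s0: "summable (\<lambda>m. A m * W m \<omega>0 * of_real (lam m) powr (-z))"
      by (rule dser_summable[OF lam summ]) (use W \<omega>0 in auto)
    have dd: "dser A lam (\<lambda>m. W m \<omega>) z - dser A lam (\<lambda>m. W m \<omega>0) z = (\<Sum>m. d m)"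
      unfolding dser_def d_def using suminf_diff[OF s1 s0] by (simp add: algebra_simps)
    have dbound: "cmod (d m) \<le> M m * cmod (W m \<omega> - W m \<omega>0)" for m
    proof -
      have "cmod (d m) = cmod (A m) * cmod (W m \<omega> - W m \<omega>0) * cmod (of_real (lam m) powr (-z))"
        by (simp add: d_def norm_mult)
      also have "\<dots> \<le> cmod (A m) * cmod (W m \<omega> - W m \<omega>0) * (lam m powr R + lam m powr (-R))"
        by (intro mult_left_mono norm_lam_powr lam R z) simp_all
      finally show ?thesis by (simp add: M_def MB_def mult_ac)
    qed
    have Wd: "cmod (W m \<omega> - W m \<omega>0) \<le> 2" for m
      using norm_triangle_ineq4[of "W m \<omega>" "W m \<omega>0"] W[of \<omega> m] W[OF \<omega>0, of m] \<omega> by auto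
    have d2: "cmod (d m) \<le> 2 * M m" for m
      using mult_left_mono[OF Wd[of m] M0[of m]] dbound[of m] by (simp add: mult.commute)
    have dn: "summable (\<lambda>m. cmod (d m))"
      by (rule summable_comparison_test'[where N=0, OF summable_mult[OF Ms, of 2]]) (use d2 in auto)
    have ds: "summable d" using dn summable_norm_cancel by blast
    have split: "(\<Sum>m. d m) = (\<Sum>i. d (i + N)) + (\<Sum>m<N. d m)"
      by (rule suminf_split_initial_segment[OF ds])
    have T1: "cmod (\<Sum>i. d (i + N)) \<le> 2 * (\<Sum>i. M (i + N))"
    proof -
      have sN: "summable (\<lambda>i. M (i + N))" using Ms by (rule summable_ignore_initial_segment)
      have "cmod (\<Sum>i. d (i + N)) \<le> (\<Sum>i. cmod (d (i + N)))"
        by (rule summable_norm) (rule summable_ignore_initial_segment[OF dn])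
      also have "\<dots> \<le> (\<Sum>i. 2 * M (i + N))"
        by (rule suminf_le) (use d2 summable_ignore_initial_segment[OF dn] summable_mult[OF sN] in auto)
      also have "\<dots> = 2 * (\<Sum>i. M (i + N))" by (rule suminf_mult[OF sN])
      finally show ?thesis .
    qed
    have T2: "cmod (\<Sum>m<N. d m) \<le> \<delta> * SN"
    proof -
      have "cmod (\<Sum>m<N. d m) \<le> (\<Sum>m<N. cmod (d m))" by (rule norm_sum)
      also have "\<dots> \<le> (\<Sum>m<N. \<delta> * M m)"
      proof (rule sum_mono)
        fix m assume m: "m \<in> {..<N}"
        then have "cmod (W m \<omega> - W m \<omega>0) < \<delta>"
          using \<omega> unfolding V_def by (auto simp: dist_norm norm_minus_commute)
        then show "cmod (d m) \<le> \<delta> * M m"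
          using dbound[of m] mult_left_mono[of "cmod (W m \<omega> - W m \<omega>0)" \<delta> "M m"] M0[of m]
          by (simp add: mult.commute)
      qed
      also have "\<dots> = \<delta> * SN" by (simp add: SN_def sum_distrib_left)
      finally show ?thesis .
    qed
    have "\<delta> * SN < e / 2"
      using e SN0 unfolding \<delta>_def by (simp add: field_simps)
    moreover have "2 * (\<Sum>i. M (i + N)) < e / 2" using N by simp
    moreover have "cmod (\<Sum>m. d m) \<le> cmod (\<Sum>i. d (i + N)) + cmod (\<Sum>m<N. d m)"
      unfolding split by (rule norm_triangle_ineq)
    ultimately show ?thesis unfolding dd using T1 T2 by linarith
  qed
  ultimately show ?thesis by blast
qed

definition Idx :: "nat \<Rightarrow> idx set" where
  "Idx r = Inl ` {p. prime p} \<union> Inr ` ({1..r} \<times> UNIV)"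

definition Phi where
  "Phi \<sigma>s c \<alpha> b h1 h2 r l D1 D2 n \<omega> =
     Zn_shift_tw \<sigma>s c \<alpha> b h1 h2 r l D1 D2 (\<lambda>p. \<omega> (Inl p)) (\<lambda>j m. \<omega> (Inr (j, m))) n 0"

lemma phi_dser:
  "phi_n_tw \<sigma>s c n \<omega>1 s =
   dser (\<lambda>k. c (Suc k) * of_real (v1 \<sigma>s (Suc k) n)) (\<lambda>k. real (Suc k)) (\<lambda>k. omega_mult \<omega>1 (Suc k)) s"
  unfolding phi_n_tw_def dser_def Let_def
  by (rule suminf_cong) (simp add: mult_ac)

lemma zeta_dser:
  "zeta_n_tw \<sigma>s n a b' \<omega>' s = dser (\<lambda>m. b' m * of_real (v2 \<sigma>s m n a)) (\<lambda>m. real m + a) \<omega>' s"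
  unfolding zeta_n_tw_def dser_def
  by (rule suminf_cong) (simp add: mult_ac)

lemma c_bound:
  assumes "euler_product_shift c F"
  obtains B where "B > 0" "\<And>k. k \<ge> 1 \<Longrightarrow> cmod (c k) \<le> B * real k ^ 2"
proof -
  have "\<forall>s. 1 < Re s \<longrightarrow> summable (\<lambda>k. cmod (c k / of_nat k powr s))"
    using assms unfolding euler_product_shift_def by blast
  from spec[OF this, of 2] have "summable (\<lambda>k. cmod (c k / (of_nat k)^2))" by simp
  then have "Bseq (\<lambda>k. cmod (c k / (of_nat k)^2))"
    by (intro convergent_imp_Bseq convergentI[OF summable_LIMSEQ_zero])
  then obtain B where B: "B > 0" "\<And>k. norm (cmod (c k / (of_nat k)^2)) \<le> B"
    by (auto elim: BseqE)
  have "cmod (c k) \<le> B * real k ^ 2" if "k \<ge> 1" for k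
  proof -
    have False: "k \<noteq> 0" using that by simp
    have pos: "real k ^ 2 > 0" using False by simp
    have "cmod (c k) / real k ^ 2 \<le> B" using B(2)[of k] by (simp add: norm_divide norm_power)
    then show ?thesis using pos by (simp add: field_simps)
  qed
  then show ?thesis using B(1) that by blast
qed

lemma summ_phi:
  assumes "euler_product_shift c F" "n \<ge> 1" "\<sigma>s > 0"
  shows "summable (\<lambda>k. cmod (c (Suc k) * of_real (v1 \<sigma>s (Suc k) n)) * real (Suc k) powr \<sigma>)"
proof -
  obtain B where B: "B > 0" "\<And>k. k \<ge> 1 \<Longrightarrow> cmod (c k) \<le> B * real k ^ 2"
    using c_bound[OF assms(1)] by blast
  have s: "summable (\<lambda>k. (real k + 1) powr (2 + \<sigma>) * exp (- (((real k + 1) / real n) powr \<sigma>s)))"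
    using assms by (intro summable_decay) auto
  show ?thesis
  proof (rule summable_comparison_test'[where N=0, OF summable_mult[OF s, of B]])
    fix k :: nat
    have v: "v1 \<sigma>s (Suc k) n = exp (- (((real k + 1) / real n) powr \<sigma>s))"
      by (simp add: v1_def add.commute)
    have p2: "(real k + 1) ^ 2 = (real k + 1) powr 2"
      by (subst powr_numeral) auto
    have "cmod (c (Suc k) * of_real (v1 \<sigma>s (Suc k) n)) * real (Suc k) powr \<sigma>
          = cmod (c (Suc k)) * exp (- (((real k + 1) / real n) powr \<sigma>s)) * (real k + 1) powr \<sigma>"
      by (simp add: norm_mult v add.commute)
    also have "\<dots> \<le> (B * (real k + 1) ^ 2) * exp (- (((real k + 1) / real n) powr \<sigma>s)) * (real k + 1) powr \<sigma>"
      using B(2)[of "Suc k"] by (intro mult_right_mono) (auto simp: add.commute)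
    also have "\<dots> = B * ((real k + 1) powr (2 + \<sigma>) * exp (- (((real k + 1) / real n) powr \<sigma>s)))"
      unfolding p2 by (simp add: powr_add mult_ac)
    finally show "norm (cmod (c (Suc k) * of_real (v1 \<sigma>s (Suc k) n)) * real (Suc k) powr \<sigma>)
        \<le> B * ((real k + 1) powr (2 + \<sigma>) * exp (- (((real k + 1) / real n) powr \<sigma>s)))"
      by simp
  qed
qed

lemma periodic_bound:
  fixes f :: "nat \<Rightarrow> complex"
  assumes "q > 0" "\<And>m. f (m + q) = f m"
  shows "\<exists>B. \<forall>m. cmod (f m) \<le> B"
proof -
  have "f m = f (m mod q)" for m
  proof (induction m rule: less_induct)
    case (less m)
    show ?case
    proof (cases "m < q")
      case False
      then have "f m = f ((m - q) + q)" by simp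
      also have "\<dots> = f (m - q)" by (rule assms(2))
      also have "\<dots> = f ((m - q) mod q)" using less assms(1) False by simp
      also have "(m - q) mod q = m mod q" using False by (simp add: mod_if)
      finally show ?thesis .
    qed simp
  qed
  moreover have "cmod (f (m mod q)) \<le> (\<Sum>i<q. cmod (f i))" for m
    using assms(1) by (intro member_le_sum) auto
  ultimately show ?thesis by metis
qed

lemma summ_zeta:
  assumes "\<exists>B. \<forall>m. cmod (b' m) \<le> B" "n \<ge> 1" "\<sigma>s > 0" "a > 0"
  shows "summable (\<lambda>m. cmod (b' m * of_real (v2 \<sigma>s m n a)) * (real m + a) powr \<sigma>)"
proof -
  obtain B where B: "\<And>m. cmod (b' m) \<le> B" using assms(1) by blast
  have s: "summable (\<lambda>m. (real m + a) powr \<sigma> * exp (- (((real m + a) / (real n + a)) powr \<sigma>s)))"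
    using assms by (intro summable_decay) auto
  show ?thesis
  proof (rule summable_comparison_test'[where N=0, OF summable_mult[OF s, of B]])
    fix m :: nat
    have "cmod (b' m * of_real (v2 \<sigma>s m n a)) * (real m + a) powr \<sigma>
        = cmod (b' m) * ((real m + a) powr \<sigma> * exp (- (((real m + a) / (real n + a)) powr \<sigma>s)))"
      by (simp add: norm_mult v2_def mult_ac)
    also have "\<dots> \<le> B * ((real m + a) powr \<sigma> * exp (- (((real m + a) / (real n + a)) powr \<sigma>s)))"
      by (intro mult_right_mono B) simp
    finally show "norm (cmod (b' m * of_real (v2 \<sigma>s m n a)) * (real m + a) powr \<sigma>)
        \<le> B * ((real m + a) powr \<sigma> * exp (- (((real m + a) / (real n + a)) powr \<sigma>s)))"
      by simp
  qed
qed

lemma norm_omega_mult: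
  assumes "\<And>p. prime p \<Longrightarrow> cmod (\<omega>1 p) = 1"
  shows "cmod (omega_mult \<omega>1 m) = 1"
  unfolding omega_mult_def
  by (simp add: prod_norm[symmetric] norm_power assms in_prime_factors_imp_prime)

lemma torus_unit: "\<omega> \<in> torus I \<Longrightarrow> cmod (\<omega> i) = 1"
  unfolding torus_def by (cases "i \<in> I") auto

lemma finite_H_idx: "finite (H_idx r l)"
proof -
  have "H_idx r l \<subseteq> {(0,0)} \<union> (\<Union>j\<in>{1..r}. {j} \<times> {1..l j})"
    unfolding H_idx_def by auto
  then show ?thesis by (rule finite_subset) auto
qed

lemma H_idx_fst: "i \<in> H_idx r l \<Longrightarrow> i \<noteq> (0,0) \<Longrightarrow> fst i \<in> {1..r}"
  unfolding H_idx_def by auto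

lemma zero_H_idx: "(0,0) \<in> H_idx r l" unfolding H_idx_def by auto

definition HP :: "nat \<Rightarrow> (nat \<Rightarrow> nat) \<Rightarrow> complex set \<Rightarrow> complex set
    \<Rightarrow> (nat \<times> nat \<Rightarrow> complex \<Rightarrow> complex) set \<Rightarrow> bool" where
  "HP r l D1 D2 = (\<lambda>U. U \<subseteq> H_carrier r l D1 D2 \<and>
     (\<forall>f\<in>U. \<exists>K \<epsilon>. \<epsilon> > 0 \<and> (\<forall>i\<in>H_idx r l. compact (K i) \<and> K i \<subseteq> H_dom D1 D2 i) \<and>
        {g\<in>H_carrier r l D1 D2. \<forall>i\<in>H_idx r l. \<forall>z\<in>K i. dist (g i z) (f i z) < \<epsilon>} \<subseteq> U))"

lemma istopology_HP: "istopology (HP r l D1 D2)"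
  unfolding istopology_def
proof (intro conjI allI impI)
  fix S T assume S: "HP r l D1 D2 S" and T: "HP r l D1 D2 T"
  show "HP r l D1 D2 (S \<inter> T)"
    unfolding HP_def
  proof (intro conjI ballI)
    show "S \<inter> T \<subseteq> H_carrier r l D1 D2" using conjunct1[OF S[unfolded HP_def]] by blast
    fix f assume f: "f \<in> S \<inter> T"
    have fS: "f \<in> S" using f by simp
    have ex1: "\<exists>K \<epsilon>. \<epsilon> > 0 \<and> (\<forall>i\<in>H_idx r l. compact (K i) \<and> K i \<subseteq> H_dom D1 D2 i) \<and>
        {g\<in>H_carrier r l D1 D2. \<forall>i\<in>H_idx r l. \<forall>z\<in>K i. dist (g i z) (f i z) < \<epsilon>} \<subseteq> S"
      by (rule bspec[OF conjunct2[OF S[unfolded HP_def]] fS])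
    obtain K1 e1 where 1: "e1 > 0" "\<forall>i\<in>H_idx r l. compact (K1 i) \<and> K1 i \<subseteq> H_dom D1 D2 i"
      "{g\<in>H_carrier r l D1 D2. \<forall>i\<in>H_idx r l. \<forall>z\<in>K1 i. dist (g i z) (f i z) < e1} \<subseteq> S"
      using ex1 by (elim exE conjE) blast
    have fT: "f \<in> T" using f by simp
    have ex2: "\<exists>K \<epsilon>. \<epsilon> > 0 \<and> (\<forall>i\<in>H_idx r l. compact (K i) \<and> K i \<subseteq> H_dom D1 D2 i) \<and>
        {g\<in>H_carrier r l D1 D2. \<forall>i\<in>H_idx r l. \<forall>z\<in>K i. dist (g i z) (f i z) < \<epsilon>} \<subseteq> T"
      by (rule bspec[OF conjunct2[OF T[unfolded HP_def]] fT])
    obtain K2 e2 where 2: "e2 > 0" "\<forall>i\<in>H_idx r l. compact (K2 i) \<and> K2 i \<subseteq> H_dom D1 D2 i"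
      "{g\<in>H_carrier r l D1 D2. \<forall>i\<in>H_idx r l. \<forall>z\<in>K2 i. dist (g i z) (f i z) < e2} \<subseteq> T"
      using ex2 by (elim exE conjE) blast
    show "\<exists>K \<epsilon>. \<epsilon> > 0 \<and> (\<forall>i\<in>H_idx r l. compact (K i) \<and> K i \<subseteq> H_dom D1 D2 i) \<and>
        {g\<in>H_carrier r l D1 D2. \<forall>i\<in>H_idx r l. \<forall>z\<in>K i. dist (g i z) (f i z) < \<epsilon>} \<subseteq> S \<inter> T"
    proof (intro exI conjI)
      show "min e1 e2 > 0" using 1 2 by simp
      show "\<forall>i\<in>H_idx r l. compact (K1 i \<union> K2 i) \<and> K1 i \<union> K2 i \<subseteq> H_dom D1 D2 i"
        using 1(2) 2(2) by (auto intro: compact_Un)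
      show "{g\<in>H_carrier r l D1 D2. \<forall>i\<in>H_idx r l. \<forall>z\<in>K1 i \<union> K2 i. dist (g i z) (f i z) < min e1 e2} \<subseteq> S \<inter> T"
      proof (rule subsetI)
        fix g assume g: "g \<in> {g\<in>H_carrier r l D1 D2. \<forall>i\<in>H_idx r l. \<forall>z\<in>K1 i \<union> K2 i. dist (g i z) (f i z) < min e1 e2}"
        then have "g \<in> {g\<in>H_carrier r l D1 D2. \<forall>i\<in>H_idx r l. \<forall>z\<in>K1 i. dist (g i z) (f i z) < e1}" by simp
        moreover from g have "g \<in> {g\<in>H_carrier r l D1 D2. \<forall>i\<in>H_idx r l. \<forall>z\<in>K2 i. dist (g i z) (f i z) < e2}" by simp
        ultimately show "g \<in> S \<inter> T" using 1(3) 2(3) by blast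
      qed
    qed
  qed
next
  fix \<K> assume K: "\<forall>U\<in>\<K>. HP r l D1 D2 U"
  show "HP r l D1 D2 (\<Union>\<K>)"
    unfolding HP_def
  proof (intro conjI ballI)
    show "\<Union>\<K> \<subseteq> H_carrier r l D1 D2"
    proof (rule Union_least)
      fix U assume "U \<in> \<K>"
      then have "HP r l D1 D2 U" using K by blast
      then show "U \<subseteq> H_carrier r l D1 D2" unfolding HP_def by (rule conjunct1)
    qed
    fix f assume "f \<in> \<Union>\<K>"
    then obtain U where U: "U \<in> \<K>" "f \<in> U" by auto
    have hU: "HP r l D1 D2 U" using K U(1) by blast
    obtain K0 e where KE: "e > 0" "\<forall>i\<in>H_idx r l. compact (K0 i) \<and> K0 i \<subseteq> H_dom D1 D2 i"
      "{g\<in>H_carrier r l D1 D2. \<forall>i\<in>H_idx r l. \<forall>z\<in>K0 i. dist (g i z) (f i z) < e} \<subseteq> U"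
      using bspec[OF conjunct2[OF hU[unfolded HP_def]] U(2)] by blast
    have "U \<subseteq> \<Union>\<K>" using U(1) by blast
    note sub = subset_trans[OF KE(3) this]
    show "\<exists>K \<epsilon>. \<epsilon> > 0 \<and> (\<forall>i\<in>H_idx r l. compact (K i) \<and> K i \<subseteq> H_dom D1 D2 i) \<and>
        {g\<in>H_carrier r l D1 D2. \<forall>i\<in>H_idx r l. \<forall>z\<in>K i. dist (g i z) (f i z) < \<epsilon>} \<subseteq> \<Union>\<K>"
      using KE(1) KE(2) sub by blast
  qed
qed

lemma H_top_HP: "H_top r l D1 D2 = topology (HP r l D1 D2)"
  unfolding H_top_def HP_def ..

lemma openin_H_top: "openin (H_top r l D1 D2) U \<longleftrightarrow> HP r l D1 D2 U"
  unfolding H_top_HP using istopology_HP by simp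

lemma topspace_H_top: "topspace (H_top r l D1 D2) = H_carrier r l D1 D2"
proof -
  have "HP r l D1 D2 (H_carrier r l D1 D2)"
    unfolding HP_def by (intro conjI ballI subset_refl exI[of _ "\<lambda>_. {}"] exI[of _ 1]) auto
  then have "openin (H_top r l D1 D2) (H_carrier r l D1 D2)" by (simp add: openin_H_top)
  then have "H_carrier r l D1 D2 \<subseteq> topspace (H_top r l D1 D2)" by (rule openin_subset)
  moreover have "topspace (H_top r l D1 D2) \<subseteq> H_carrier r l D1 D2"
    using openin_H_top[THEN iffD1, OF openin_topspace[of "H_top r l D1 D2"]] unfolding HP_def by blast
  ultimately show ?thesis by blast
qed

definition hyp where
  "hyp \<sigma>s c F b \<alpha> r l n \<longleftrightarrow> euler_product_shift c F \<and> n \<ge> 1 \<and> \<sigma>s > 0 \<and> (\<forall>j\<in>{1..r}. 0 < \<alpha> j) \<and>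
     (\<forall>(j, i)\<in>H_idx r l - {(0,0)}. \<exists>q>0. \<forall>m. b (m + q) j i = b m j i)"

definition At where
  "At \<sigma>s c \<alpha> b n i m = (if i = (0,0) then c (Suc m) * of_real (v1 \<sigma>s (Suc m) n)
      else b m (fst i) (snd i) * of_real (v2 \<sigma>s m n (\<alpha> (fst i))))"

definition Lt where
  "Lt \<alpha> i m = (if i = (0,0) then real (Suc m) else real m + \<alpha> (fst i))"

definition Wt :: "nat \<times> nat \<Rightarrow> nat \<Rightarrow> (idx \<Rightarrow> complex) \<Rightarrow> complex" where
  "Wt i m \<omega> = (if i = (0,0) then omega_mult (\<lambda>p. \<omega> (Inl p)) (Suc m) else \<omega> (Inr (fst i, m)))"

lemma At_00: "At \<sigma>s c \<alpha> b n (0,0) = (\<lambda>k. c (Suc k) * of_real (v1 \<sigma>s (Suc k) n))"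
  by (rule ext) (simp add: At_def)
lemma Lt_00: "Lt \<alpha> (0,0) = (\<lambda>k. real (Suc k))"
  by (rule ext) (simp add: Lt_def)
lemma At_ne: "i \<noteq> (0,0) \<Longrightarrow> At \<sigma>s c \<alpha> b n i = (\<lambda>m. b m (fst i) (snd i) * of_real (v2 \<sigma>s m n (\<alpha> (fst i))))"
  by (rule ext) (simp add: At_def)
lemma Lt_ne: "i \<noteq> (0,0) \<Longrightarrow> Lt \<alpha> i = (\<lambda>m. real m + \<alpha> (fst i))"
  by (rule ext) (simp add: Lt_def)
lemma Wt_00: "(\<lambda>m. Wt (0,0) m \<omega>) = (\<lambda>k. omega_mult (\<lambda>p. \<omega> (Inl p)) (Suc k))"
  by (rule ext) (simp add: Wt_def)
lemma Wt_ne: "i \<noteq> (0,0) \<Longrightarrow> (\<lambda>m. Wt i m \<omega>) = (\<lambda>m. \<omega> (Inr (fst i, m)))"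
  by (rule ext) (simp add: Wt_def)

lemma Phi_form:
  "Phi \<sigma>s c \<alpha> b h1 h2 r l D1 D2 n \<omega> i z =
    (if i \<in> H_idx r l then (if z \<in> H_dom D1 D2 i then dser (At \<sigma>s c \<alpha> b n i) (Lt \<alpha> i) (\<lambda>m. Wt i m \<omega>) z else 0) else 0)"
proof (cases "i = (0,0)")
  case True
  then show ?thesis
    by (simp add: Phi_def Zn_shift_tw_def H_dom_def zero_H_idx phi_dser At_00 Lt_00 Wt_00 del: of_nat_Suc)
next
  case False
  then show ?thesis
    by (simp add: Phi_def Zn_shift_tw_def H_dom_def zeta_dser At_ne Lt_ne Wt_ne)
qed

lemma Lt_pos:
  assumes "hyp \<sigma>s c F b \<alpha> r l n" "i \<in> H_idx r l"
  shows "Lt \<alpha> i m > 0"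
proof (cases "i = (0,0)")
  case False
  then have "fst i \<in> {1..r}" using H_idx_fst assms(2) by blast
  then have "\<alpha> (fst i) > 0" using assms(1) unfolding hyp_def by blast
  then show ?thesis using False by (simp add: Lt_def add_nonneg_pos)
qed (simp add: Lt_def)

lemma At_summ:
  assumes "hyp \<sigma>s c F b \<alpha> r l n" "i \<in> H_idx r l"
  shows "summable (\<lambda>m. cmod (At \<sigma>s c \<alpha> b n i m) * Lt \<alpha> i m powr \<sigma>)"
proof (cases "i = (0,0)")
  case True
  have "euler_product_shift c F" "n \<ge> 1" "\<sigma>s > 0" using assms(1) unfolding hyp_def by auto
  from summ_phi[OF this] show ?thesis using True by (simp add: At_def Lt_def)
next
  case False
  obtain j k where i: "i = (j, k)" by (cases i)
  have j: "j \<in> {1..r}" using H_idx_fst assms(2) False i by fastforce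
  have a: "\<alpha> j > 0" using assms(1) j unfolding hyp_def by blast
  have "i \<in> H_idx r l - {(0,0)}" using assms(2) False by simp
  then have "\<exists>q>0. \<forall>m. b (m + q) j k = b m j k" using assms(1) i unfolding hyp_def by blast
  then obtain q where q: "q > 0" "\<And>m. b (m + q) j k = b m j k" by blast
  have bb: "\<exists>B. \<forall>m. cmod (b m j k) \<le> B" by (rule periodic_bound[of q "\<lambda>m. b m j k", OF q])
  have "n \<ge> 1" "\<sigma>s > 0" using assms(1) unfolding hyp_def by auto
  from summ_zeta[OF bb this a] show ?thesis using False i by (simp add: At_ne Lt_ne)
qed

lemma Wt_bound:
  assumes "\<omega> \<in> torus I"
  shows "cmod (Wt i m \<omega>) \<le> 1"
proof (cases "i = (0,0)")
  case True
  have "cmod (omega_mult (\<lambda>p. \<omega> (Inl p)) (Suc m)) = 1"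
    by (rule norm_omega_mult) (rule torus_unit[OF assms])
  then show ?thesis using True by (simp add: Wt_def)
next
  case False
  then show ?thesis using torus_unit[OF assms] by (simp add: Wt_def)
qed

lemma Wt_cont: "continuous_on UNIV (Wt i m)"
  unfolding Wt_def omega_mult_def
  by (cases "i = (0,0)") (auto intro!: continuous_intros continuous_on_product_coordinates)

lemma Phi_carrier:
  assumes "hyp \<sigma>s c F b \<alpha> r l n" "\<omega> \<in> torus I"
  shows "Phi \<sigma>s c \<alpha> b h1 h2 r l D1 D2 n \<omega> \<in> H_carrier r l D1 D2"
  unfolding H_carrier_def
proof (intro CollectI conjI ballI allI impI)
  fix i assume i: "i \<in> H_idx r l"
  have h: "dser (At \<sigma>s c \<alpha> b n i) (Lt \<alpha> i) (\<lambda>m. Wt i m \<omega>) holomorphic_on UNIV"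
    by (intro dser_holo Lt_pos[OF assms(1) i] At_summ[OF assms(1) i] Wt_bound[OF assms(2)])
  show "Phi \<sigma>s c \<alpha> b h1 h2 r l D1 D2 n \<omega> i holomorphic_on H_dom D1 D2 i"
    by (rule holomorphic_transform[OF holomorphic_on_subset[OF h subset_UNIV]]) (simp add: Phi_form i)
  fix z assume "z \<notin> H_dom D1 D2 i"
  then show "Phi \<sigma>s c \<alpha> b h1 h2 r l D1 D2 n \<omega> i z = 0" by (simp add: Phi_form)
next
  fix i assume "i \<notin> H_idx r l"
  then show "Phi \<sigma>s c \<alpha> b h1 h2 r l D1 D2 n \<omega> i = (\<lambda>_. 0)" by (simp add: Phi_form fun_eq_iff)
qed

lemma Phi_cont:
  assumes H: "hyp \<sigma>s c F b \<alpha> r l n"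
  shows "continuous_map (top_of_set (torus I)) (H_top r l D1 D2) (Phi \<sigma>s c \<alpha> b h1 h2 r l D1 D2 n)"
  unfolding continuous_map_def
proof (intro conjI allI impI)
  let ?P = "Phi \<sigma>s c \<alpha> b h1 h2 r l D1 D2 n"
  show "?P \<in> topspace (top_of_set (torus I)) \<rightarrow> topspace (H_top r l D1 D2)"
    using Phi_carrier[OF H] by (auto simp: topspace_H_top)
  fix U assume "openin (H_top r l D1 D2) U"
  then have HU: "HP r l D1 D2 U" by (simp add: openin_H_top)
  show "openin (top_of_set (torus I)) {x \<in> topspace (top_of_set (torus I)). ?P x \<in> U}"
  proof (subst openin_subopen, intro ballI)
    fix \<omega>0 assume "\<omega>0 \<in> {x \<in> topspace (top_of_set (torus I)). ?P x \<in> U}"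
    then have w0: "\<omega>0 \<in> torus I" "?P \<omega>0 \<in> U" by auto
    have ex: "\<exists>K \<epsilon>. \<epsilon> > 0 \<and> (\<forall>i\<in>H_idx r l. compact (K i) \<and> K i \<subseteq> H_dom D1 D2 i) \<and>
        {g\<in>H_carrier r l D1 D2. \<forall>i\<in>H_idx r l. \<forall>z\<in>K i. dist (g i z) (?P \<omega>0 i z) < \<epsilon>} \<subseteq> U"
      by (rule bspec[OF conjunct2[OF HU[unfolded HP_def]] w0(2)])
    obtain K e where Ke: "e > 0" "\<forall>i\<in>H_idx r l. compact (K i) \<and> K i \<subseteq> H_dom D1 D2 i"
      "{g\<in>H_carrier r l D1 D2. \<forall>i\<in>H_idx r l. \<forall>z\<in>K i. dist (g i z) (?P \<omega>0 i z) < e} \<subseteq> U"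
      using ex by (elim exE conjE) blast
    have "\<forall>i\<in>H_idx r l. \<exists>V. open V \<and> \<omega>0 \<in> V \<and>
       (\<forall>\<omega>\<in>V \<inter> torus I. \<forall>z\<in>K i. cmod (dser (At \<sigma>s c \<alpha> b n i) (Lt \<alpha> i) (\<lambda>m. Wt i m \<omega>) z
            - dser (At \<sigma>s c \<alpha> b n i) (Lt \<alpha> i) (\<lambda>m. Wt i m \<omega>0) z) < e)"
    proof
      fix i assume i: "i \<in> H_idx r l"
      show "\<exists>V. open V \<and> \<omega>0 \<in> V \<and>
       (\<forall>\<omega>\<in>V \<inter> torus I. \<forall>z\<in>K i. cmod (dser (At \<sigma>s c \<alpha> b n i) (Lt \<alpha> i) (\<lambda>m. Wt i m \<omega>) z
            - dser (At \<sigma>s c \<alpha> b n i) (Lt \<alpha> i) (\<lambda>m. Wt i m \<omega>0) z) < e)"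
        by (rule dser_cont[OF Lt_pos[OF H i] At_summ[OF H i] Wt_bound Wt_cont w0(1) _ Ke(1)])
           (use Ke(2) i in auto)
    qed
    then obtain Vf where Vf: "\<forall>i\<in>H_idx r l. open (Vf i) \<and> \<omega>0 \<in> Vf i \<and>
       (\<forall>\<omega>\<in>Vf i \<inter> torus I. \<forall>z\<in>K i. cmod (dser (At \<sigma>s c \<alpha> b n i) (Lt \<alpha> i) (\<lambda>m. Wt i m \<omega>) z
            - dser (At \<sigma>s c \<alpha> b n i) (Lt \<alpha> i) (\<lambda>m. Wt i m \<omega>0) z) < e)"
      by (rule bchoice_iff[THEN iffD1, elim_format]) blast
    define V where "V = (\<Inter>i\<in>H_idx r l. Vf i)"
    have oV: "open V" unfolding V_def using Vf finite_H_idx by (intro open_INT) auto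
    have w0V: "\<omega>0 \<in> V" unfolding V_def using Vf by auto
    show "\<exists>T. openin (top_of_set (torus I)) T \<and> \<omega>0 \<in> T \<and> T \<subseteq> {x \<in> topspace (top_of_set (torus I)). ?P x \<in> U}"
    proof (intro exI conjI)
      show "openin (top_of_set (torus I)) (torus I \<inter> V)" by (rule openin_open_Int[OF oV])
      show "\<omega>0 \<in> torus I \<inter> V" using w0 w0V by simp
      show "torus I \<inter> V \<subseteq> {x \<in> topspace (top_of_set (torus I)). ?P x \<in> U}"
      proof (rule subsetI)
        fix \<omega> assume \<omega>: "\<omega> \<in> torus I \<inter> V"
        have "?P \<omega> \<in> {g\<in>H_carrier r l D1 D2. \<forall>i\<in>H_idx r l. \<forall>z\<in>K i. dist (g i z) (?P \<omega>0 i z) < e}"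
        proof (intro CollectI conjI ballI)
          show "?P \<omega> \<in> H_carrier r l D1 D2" using Phi_carrier[OF H] \<omega> by blast
          fix i z assume i: "i \<in> H_idx r l" and z: "z \<in> K i"
          have zd: "z \<in> H_dom D1 D2 i" using Ke(2) i z by blast
          have "\<omega> \<in> Vf i \<inter> torus I" using \<omega> i unfolding V_def by blast
          then have "cmod (dser (At \<sigma>s c \<alpha> b n i) (Lt \<alpha> i) (\<lambda>m. Wt i m \<omega>) z
            - dser (At \<sigma>s c \<alpha> b n i) (Lt \<alpha> i) (\<lambda>m. Wt i m \<omega>0) z) < e"
            using Vf i z by blast
          then show "dist (?P \<omega> i z) (?P \<omega>0 i z) < e"
            by (simp add: Phi_form i zd dist_norm)
        qed
        then show "\<omega> \<in> {x \<in> topspace (top_of_set (torus I)). ?P x \<in> U}"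
          using Ke(3) \<omega> by auto
      qed
    qed
  qed
qed

definition base :: "(nat \<Rightarrow> complex) \<Rightarrow> (nat \<Rightarrow> nat \<Rightarrow> complex) \<Rightarrow> nat \<Rightarrow> idx \<Rightarrow> complex" where
  "base \<omega>1 \<omega>2 r i = (case i of Inl p \<Rightarrow> if prime p then \<omega>1 p else 1
                                | Inr (j, m) \<Rightarrow> if j \<in> {1..r} then \<omega>2 j m else 1)"

definition Lf :: "real \<Rightarrow> (nat \<Rightarrow> real) \<Rightarrow> (nat \<Rightarrow> real) \<Rightarrow> idx \<Rightarrow> real" where
  "Lf h1 h2 \<alpha> i = (case i of Inl p \<Rightarrow> h1 * ln (real p) | Inr (j, m) \<Rightarrow> h2 j * ln (real m + \<alpha> j))"

definition xi :: "real \<Rightarrow> (nat \<Rightarrow> real) \<Rightarrow> (nat \<Rightarrow> real) \<Rightarrow> nat \<Rightarrow> idx \<Rightarrow> complex" where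
  "xi h1 h2 \<alpha> r i = (if i \<in> Idx r then cis (- Lf h1 h2 \<alpha> i) else 1)"

lemma Inl_Idx[simp]: "Inl p \<in> Idx r \<longleftrightarrow> prime p"
  unfolding Idx_def by auto

lemma Inr_Idx[simp]: "Inr (j, m) \<in> Idx r \<longleftrightarrow> j \<in> {1..r}"
  unfolding Idx_def by auto

lemma base_torus:
  assumes "\<forall>p. prime p \<longrightarrow> cmod (\<omega>1 p) = 1" "\<forall>j\<in>{1..r}. \<forall>m. cmod (\<omega>2 j m) = 1"
  shows "base \<omega>1 \<omega>2 r \<in> torus (Idx r)"
  unfolding torus_def
proof (intro CollectI allI conjI impI)
  fix i :: idx
  show "i \<in> Idx r \<Longrightarrow> cmod (base \<omega>1 \<omega>2 r i) = 1"
    using assms by (cases i) (auto simp: base_def)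
  show "i \<notin> Idx r \<Longrightarrow> base \<omega>1 \<omega>2 r i = 1"
    by (cases i) (auto simp: base_def)
qed

lemma xi_torus: "xi h1 h2 \<alpha> r \<in> torus (Idx r)"
  unfolding torus_def xi_def by auto

lemma cis_prod: "finite A \<Longrightarrow> (\<Prod>x\<in>A. cis (f x)) = cis (\<Sum>x\<in>A. f x)"
  by (induction A rule: finite_induct) (auto simp: cis_mult)

lemma ln_nat_factor:
  assumes "m \<ge> 1"
  shows "ln (real m) = (\<Sum>p\<in>prime_factors m. real (multiplicity p m) * ln (real p))"
proof -
  have eq: "(\<Prod>p\<in>prime_factors m. p ^ multiplicity p m) = m"
    using assms by (subst prod_prime_factors) auto
  have "real (\<Prod>p\<in>prime_factors m. p ^ multiplicity p m) = (\<Prod>p\<in>prime_factors m. real p ^ multiplicity p m)"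
    by (simp only: of_nat_prod of_nat_power)
  then have rm: "real m = (\<Prod>p\<in>prime_factors m. real p ^ multiplicity p m)"
    unfolding eq .
  have nz: "real p ^ multiplicity p m \<noteq> 0" if "p \<in> prime_factors m" for p
  proof -
    have "prime p" using that by (rule in_prime_factors_imp_prime)
    then have "p > 0" by (rule prime_gt_0_nat)
    then show ?thesis by simp
  qed
  have "ln (real m) = (\<Sum>p\<in>prime_factors m. ln (real p ^ multiplicity p m))"
    unfolding rm by (rule ln_prod[OF finite_set_mset nz])
  also have "\<dots> = (\<Sum>p\<in>prime_factors m. real (multiplicity p m) * ln (real p))"
    by (simp only: ln_realpow)
  finally show ?thesis .
qed

lemma powr_shift:
  assumes "x > 0"
  shows "(of_real x :: complex) powr (-(z + \<i> * of_nat k * of_real h)) = of_real x powr (-z) * cis (-(h * ln x)) ^ k"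
proof -
  have L: "ln (of_real x :: complex) = of_real (ln x)" using assms by (simp add: Ln_of_real)
  have x0: "(of_real x :: complex) \<noteq> 0" using assms by simp
  have arg: "(-(z + \<i> * of_nat k * of_real h)) * of_real (ln x) =
      (-z) * of_real (ln x) + \<i> * of_real (real k * (-(h * ln x)))"
    by (simp add: algebra_simps)
  have "(of_real x :: complex) powr (-(z + \<i> * of_nat k * of_real h)) =
        exp ((-z) * of_real (ln x) + \<i> * of_real (real k * (-(h * ln x))))"
    unfolding powr_def using x0 by (simp only: if_False L arg)
  also have "\<dots> = of_real x powr (-z) * exp (\<i> * of_real (real k * (-(h * ln x))))"
    unfolding exp_add powr_def using x0 by (simp only: if_False L)
  also have "exp (\<i> * of_real (real k * (-(h * ln x)))) = cis (-(h * ln x)) ^ k"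
    by (subst Complex.DeMoivre) (simp only: cis_conv_exp)
  finally show ?thesis .
qed

lemma omega_mult_shift:
  assumes "m \<ge> 1"
  shows "omega_mult (\<lambda>p. base \<omega>1 \<omega>2 r (Inl p) * xi h1 h2 \<alpha> r (Inl p) ^ k) m =
         omega_mult \<omega>1 m * cis (-(h1 * ln (real m))) ^ k"
proof -
  have "omega_mult (\<lambda>p. base \<omega>1 \<omega>2 r (Inl p) * xi h1 h2 \<alpha> r (Inl p) ^ k) m =
        (\<Prod>p\<in>prime_factors m. (\<omega>1 p * cis (-(h1 * ln (real p))) ^ k) ^ multiplicity p m)"
    unfolding omega_mult_def
    by (rule prod.cong[OF refl]) (simp add: base_def xi_def Lf_def in_prime_factors_imp_prime)
  also have "\<dots> = omega_mult \<omega>1 m * (\<Prod>p\<in>prime_factors m. cis (-(h1 * ln (real p))) ^ multiplicity p m) ^ k"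
  proof -
    have e: "(\<omega>1 p * cis (-(h1 * ln (real p))) ^ k) ^ e = \<omega>1 p ^ e * (cis (-(h1 * ln (real p))) ^ e) ^ k"
      for p e by (simp add: power_mult_distrib mult.commute flip: power_mult)
    show ?thesis
      unfolding omega_mult_def e prod.distrib prod_power_distrib ..
  qed
  also have "(\<Prod>p\<in>prime_factors m. cis (-(h1 * ln (real p))) ^ multiplicity p m) =
             (\<Prod>p\<in>prime_factors m. cis (-(h1 * (real (multiplicity p m) * ln (real p)))))"
    by (rule prod.cong[OF refl]) (simp add: Complex.DeMoivre algebra_simps)
  also have "\<dots> = cis (-(h1 * ln (real m)))"
    by (simp add: cis_prod ln_nat_factor[OF assms] sum_negf sum_distrib_left)
  finally show ?thesis .
qed

lemma shift_eq:
  assumes "\<forall>j\<in>{1..r}. 0 < \<alpha> j"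
  shows "Zn_shift_tw \<sigma>s c \<alpha> b h1 h2 r l D1 D2 \<omega>1 \<omega>2 n k =
         Phi \<sigma>s c \<alpha> b h1 h2 r l D1 D2 n (pt (base \<omega>1 \<omega>2 r) (xi h1 h2 \<alpha> r) k)"
proof (intro ext)
  fix i z
  let ?w = "pt (base \<omega>1 \<omega>2 r) (xi h1 h2 \<alpha> r) k"
  show "Zn_shift_tw \<sigma>s c \<alpha> b h1 h2 r l D1 D2 \<omega>1 \<omega>2 n k i z = Phi \<sigma>s c \<alpha> b h1 h2 r l D1 D2 n ?w i z"
  proof (cases "i = (0,0)")
    case True
    have "phi_n_tw \<sigma>s c n \<omega>1 (z + \<i> * of_nat k * of_real h1) = phi_n_tw \<sigma>s c n (\<lambda>p. ?w (Inl p)) z"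
      unfolding phi_n_tw_def Let_def
    proof (rule suminf_cong)
      fix k' :: nat
      have e: "(of_nat (Suc k') :: complex) = of_real (real (Suc k'))" by simp
      have "omega_mult (\<lambda>p. ?w (Inl p)) (Suc k') = omega_mult \<omega>1 (Suc k') * cis (-(h1 * ln (real (Suc k')))) ^ k"
        unfolding pt_def by (rule omega_mult_shift) simp
      moreover have "(of_nat (Suc k') :: complex) powr (-(z + \<i> * of_nat k * of_real h1)) =
          of_nat (Suc k') powr (-z) * cis (-(h1 * ln (real (Suc k')))) ^ k"
        unfolding e by (rule powr_shift) simp
      ultimately show "c (Suc k') * omega_mult \<omega>1 (Suc k') * of_real (v1 \<sigma>s (Suc k') n) *
          of_nat (Suc k') powr (-(z + \<i> * of_nat k * of_real h1)) =
          c (Suc k') * omega_mult (\<lambda>p. ?w (Inl p)) (Suc k') * of_real (v1 \<sigma>s (Suc k') n) *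
          of_nat (Suc k') powr (-z)"
        by (simp add: mult_ac)
    qed
    then show ?thesis using True by (simp add: Phi_def Zn_shift_tw_def)
  next
    case False
    show ?thesis
    proof (cases "i \<in> H_idx r l")
      case iH: True
      define j where "j = fst i"
      define q where "q = snd i"
      have j: "j \<in> {1..r}" using H_idx_fst[OF iH False] by (simp add: j_def)
      have a: "\<alpha> j > 0" using assms j by blast
      have "zeta_n_tw \<sigma>s n (\<alpha> j) (\<lambda>m. b m j q) (\<omega>2 j) (z + \<i> * of_nat k * of_real (h2 j)) =
            zeta_n_tw \<sigma>s n (\<alpha> j) (\<lambda>m. b m j q) (\<lambda>m. ?w (Inr (j, m))) z"
        unfolding zeta_n_tw_def
      proof (rule suminf_cong)
        fix m :: nat
        have "(of_real (real m + \<alpha> j) :: complex) powr (-(z + \<i> * of_nat k * of_real (h2 j))) =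
            of_real (real m + \<alpha> j) powr (-z) * cis (-(h2 j * ln (real m + \<alpha> j))) ^ k"
          by (rule powr_shift) (use a in \<open>simp add: add_nonneg_pos\<close>)
        moreover have "?w (Inr (j, m)) = \<omega>2 j m * cis (-(h2 j * ln (real m + \<alpha> j))) ^ k"
          using j by (simp add: pt_def base_def xi_def Lf_def)
        ultimately show "b m j q * \<omega>2 j m * of_real (v2 \<sigma>s m n (\<alpha> j)) *
            of_real (real m + \<alpha> j) powr (-(z + \<i> * of_nat k * of_real (h2 j))) =
            b m j q * ?w (Inr (j, m)) * of_real (v2 \<sigma>s m n (\<alpha> j)) * of_real (real m + \<alpha> j) powr (-z)"
          by (simp add: mult_ac)
      qed
      then show ?thesis using False iH unfolding Phi_def Zn_shift_tw_def j_def q_def by simp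
    next
      case False
      then show ?thesis using \<open>i \<noteq> (0,0)\<close> by (simp add: Phi_def Zn_shift_tw_def)
    qed
  qed
qed

lemma L_fam_Some: "L_fam h1 h2 \<alpha> (Some i) = Lf h1 h2 \<alpha> i"
  by (cases i) (auto simp: L_fam_def Lf_def)

lemma nonres_xi:
  assumes indep: "Q_lin_indep (L_fam h1 h2 \<alpha>) (L_index r)"
  shows "nonres (Idx r) (xi h1 h2 \<alpha> r)"
  unfolding nonres_def
proof (intro allI impI notI)
  fix n assume n: "adm (Idx r) n \<and> n \<noteq> (\<lambda>_. 0)" and eq: "chr n (xi h1 h2 \<alpha> r) = 1"
  define J where "J = supp n"
  have J: "finite J" "J \<subseteq> Idx r" using n by (auto simp: adm_def J_def)
  define S where "S = (\<Sum>i\<in>J. of_int (n i) * Lf h1 h2 \<alpha> i)"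
  have "chr n (xi h1 h2 \<alpha> r) = (\<Prod>i\<in>J. cis (of_int (n i) * (- Lf h1 h2 \<alpha> i)))"
    unfolding chr_def J_def[symmetric]
    by (rule prod.cong[OF refl]) (use J in \<open>auto simp: xi_def epow_cis\<close>)
  also have "\<dots> = cis (- S)"
    by (simp add: cis_prod[OF J(1)] S_def sum_negf)
  finally have "cis (- S) = 1" using eq by simp
  then have "exp (\<i> * of_real (- S)) = 1" by (simp add: cis_conv_exp)
  then obtain q :: int where q: "- S = of_int (2 * q) * pi"
    unfolding exp_eq_1 by auto
  define A where "A = insert None (Some ` J)"
  define Q where "Q x = (case x of None \<Rightarrow> (of_int (2 * q) :: rat) | Some i \<Rightarrow> of_int (n i))" for x :: "(nat + nat \<times> nat) option"
  have A: "finite A" "A \<subseteq> L_index r"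
    using J unfolding A_def L_index_def Idx_def by auto
  have "(\<Sum>x\<in>A. real_of_rat (Q x) * L_fam h1 h2 \<alpha> x) = of_int (2 * q) * pi + S"
  proof -
    have "None \<notin> Some ` J" by auto
    then have "(\<Sum>x\<in>A. real_of_rat (Q x) * L_fam h1 h2 \<alpha> x) =
        real_of_rat (Q None) * L_fam h1 h2 \<alpha> None + (\<Sum>x\<in>Some ` J. real_of_rat (Q x) * L_fam h1 h2 \<alpha> x)"
      unfolding A_def using J(1) by (simp add: sum.insert)
    also have "(\<Sum>x\<in>Some ` J. real_of_rat (Q x) * L_fam h1 h2 \<alpha> x) = S"
      unfolding S_def by (subst sum.reindex) (auto simp: Q_def L_fam_Some of_rat_of_int_eq)
    also have "real_of_rat (Q None) * L_fam h1 h2 \<alpha> None = of_int (2 * q) * pi"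
      by (simp only: Q_def option.case L_fam_def of_rat_of_int_eq)
    finally show ?thesis .
  qed
  also have "\<dots> = 0" using q by simp
  finally have sum0: "(\<Sum>x\<in>A. real_of_rat (Q x) * L_fam h1 h2 \<alpha> x) = 0" .
  have "\<forall>S q. finite S \<and> S \<subseteq> L_index r \<and> (\<Sum>i\<in>S. real_of_rat (q i) * L_fam h1 h2 \<alpha> i) = 0 \<longrightarrow> (\<forall>i\<in>S. q i = 0)"
    using indep unfolding Q_lin_indep_def .
  then have "finite A \<and> A \<subseteq> L_index r \<and> (\<Sum>x\<in>A. real_of_rat (Q x) * L_fam h1 h2 \<alpha> x) = 0 \<longrightarrow> (\<forall>x\<in>A. Q x = 0)"
    by (elim allE[of _ A] allE[of _ Q])
  then have "\<forall>x\<in>A. Q x = 0" using A sum0 by blast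
  moreover obtain i0 where i0: "n i0 \<noteq> 0" using n by auto
  then have "Some i0 \<in> A" unfolding A_def J_def supp_def by auto
  ultimately have "Q (Some i0) = 0" by blast
  then show False using i0 by (simp add: Q_def)
qed

lemma space_borel_of: "space (borel_of X) = topspace X"
  unfolding borel_of_def space_measure_of_conv ..

lemma sets_borel_of: "sets (borel_of X) = sigma_sets (topspace X) {U. openin X U}"
  unfolding borel_of_def by (rule sets_measure_of) (auto dest: openin_subset)

lemma cont_meas:
  assumes "continuous_map X euclideanreal g"
  shows "g \<in> borel_measurable (borel_of X)"
proof (rule borel_measurableI)
  fix S :: "real set" assume "open S"
  have o: "openin X {x \<in> topspace X. g x \<in> S}"
    by (rule openin_continuous_map_preimage[OF assms]) (use \<open>open S\<close> in \<open>simp only: open_openin[symmetric]\<close>)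
  have e: "g -` S \<inter> space (borel_of X) = {x \<in> topspace X. g x \<in> S}"
    by (auto simp: space_borel_of)
  show "g -` S \<inter> space (borel_of X) \<in> sets (borel_of X)"
    unfolding sets_borel_of e by (rule sigma_sets.Basic) (simp add: o)
qed

lemma ext_meas:
  fixes f :: "(idx \<Rightarrow> complex) \<Rightarrow> 'b"
  assumes fc: "continuous_map (top_of_set (torus I)) X f" and e0: "e0 \<in> torus I"
  shows "(\<lambda>\<omega>. if \<omega> \<in> torus I then f \<omega> else f e0) \<in> haar I \<rightarrow>\<^sub>M borel_of X"
  unfolding borel_of_def
proof (rule measurable_measure_of)
  show "{U. openin X U} \<subseteq> Pow (topspace X)" by (auto dest: openin_subset)
  have "f \<omega> \<in> topspace X" if "\<omega> \<in> torus I" for \<omega>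
    using continuous_map_image_subset_topspace[OF fc] that by auto
  then show "(\<lambda>\<omega>. if \<omega> \<in> torus I then f \<omega> else f e0) \<in> space (haar I) \<rightarrow> topspace X"
    using e0 by auto
  fix U assume "U \<in> {U. openin X U}"
  then have "openin X U" by simp
  from openin_continuous_map_preimage[OF fc this]
  have "openin (top_of_set (torus I)) {x \<in> torus I. f x \<in> U}" by simp
  then obtain V where V: "open V" "{x \<in> torus I. f x \<in> U} = torus I \<inter> V"
    unfolding openin_open by blast
  have cl: "closed (torus I)" by (rule compact_imp_closed[OF compact_torus])
  have TV: "torus I \<inter> V \<in> sets borel" using borel_closed[OF cl] borel_open[OF V(1)] by (rule sets.Int)
  have cT: "- torus I \<in> sets borel" using cl by (intro borel_open) (simp add: open_Compl)
  have "(\<lambda>\<omega>. if \<omega> \<in> torus I then f \<omega> else f e0) -` U \<inter> space (haar I) \<in> sets borel"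
  proof (cases "f e0 \<in> U")
    case True
    have "(\<lambda>\<omega>. if \<omega> \<in> torus I then f \<omega> else f e0) -` U \<inter> space (haar I) = (torus I \<inter> V) \<union> - torus I"
    proof (rule set_eqI)
      fix \<omega> show "\<omega> \<in> (\<lambda>\<omega>. if \<omega> \<in> torus I then f \<omega> else f e0) -` U \<inter> space (haar I) \<longleftrightarrow> \<omega> \<in> (torus I \<inter> V) \<union> - torus I"
        using V(2) True by (cases "\<omega> \<in> torus I") (simp_all, blast)
    qed
    then show ?thesis using TV cT by simp
  next
    case False
    have "(\<lambda>\<omega>. if \<omega> \<in> torus I then f \<omega> else f e0) -` U \<inter> space (haar I) = torus I \<inter> V"
    proof (rule set_eqI)
      fix \<omega> show "\<omega> \<in> (\<lambda>\<omega>. if \<omega> \<in> torus I then f \<omega> else f e0) -` U \<inter> space (haar I) \<longleftrightarrow> \<omega> \<in> torus I \<inter> V"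
        using V(2) False by (cases "\<omega> \<in> torus I") (simp_all, blast)
    qed
    then show ?thesis using TV by simp
  qed
  then show "(\<lambda>\<omega>. if \<omega> \<in> torus I then f \<omega> else f e0) -` U \<inter> space (haar I) \<in> sets (haar I)"
    by simp
qed

lemma omega_mult_one: "omega_mult (\<lambda>_. 1) m = 1"
  by (simp add: omega_mult_def)

lemma Zn_untw:
  "Zn_shift \<sigma>s c \<alpha> b h1 h2 r l D1 D2 n = Zn_shift_tw \<sigma>s c \<alpha> b h1 h2 r l D1 D2 (\<lambda>_. 1) (\<lambda>_ _. 1) n"
  by (intro ext) (simp add: Zn_shift_def Zn_shift_tw_def phi_n_def phi_n_tw_def zeta_n_def zeta_n_tw_def omega_mult_one)

lemma one_torus: "(\<lambda>_. 1) \<in> torus I"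
  by (simp add: torus_def)

lemma main_tw:
  assumes H: "hyp \<sigma>s c F b \<alpha> r l n" and nr: "nonres (Idx r) (xi h1 h2 \<alpha> r)"
    and w1: "\<forall>p. prime p \<longrightarrow> cmod (\<omega>1 p) = 1" and w2: "\<forall>j\<in>{1..r}. \<forall>m. cmod (\<omega>2 j m) = 1"
  shows "weak_conv_top (H_top r l D1 D2)
     (empirical (H_top r l D1 D2) (Zn_shift_tw \<sigma>s c \<alpha> b h1 h2 r l D1 D2 \<omega>1 \<omega>2 n))
     (distr (haar (Idx r)) (borel_of (H_top r l D1 D2))
        (\<lambda>\<omega>. if \<omega> \<in> torus (Idx r) then Phi \<sigma>s c \<alpha> b h1 h2 r l D1 D2 n \<omega>
              else Phi \<sigma>s c \<alpha> b h1 h2 r l D1 D2 n (\<lambda>_. 1)))"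
  unfolding weak_conv_top_def
proof (intro allI impI)
  let ?X = "H_top r l D1 D2"
  let ?I = "Idx r"
  let ?\<Phi> = "Phi \<sigma>s c \<alpha> b h1 h2 r l D1 D2 n"
  define \<Phi>' where "\<Phi>' = (\<lambda>\<omega>. if \<omega> \<in> torus ?I then ?\<Phi> \<omega> else ?\<Phi> (\<lambda>_. 1))"
  define Z where "Z = Zn_shift_tw \<sigma>s c \<alpha> b h1 h2 r l D1 D2 \<omega>1 \<omega>2 n"
  define \<theta> where "\<theta> = base \<omega>1 \<omega>2 r"
  define \<xi> where "\<xi> = xi h1 h2 \<alpha> r"
  fix g assume g: "continuous_map ?X euclideanreal g \<and> (\<exists>B. \<forall>x\<in>topspace ?X. \<bar>g x\<bar> \<le> B)"
  then obtain B where B: "\<And>x. x \<in> topspace ?X \<Longrightarrow> \<bar>g x\<bar> \<le> B" by blast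
  have gc: "continuous_map ?X euclideanreal g" using g by blast
  have \<Phi>c: "continuous_map (top_of_set (torus ?I)) ?X ?\<Phi>" by (rule Phi_cont[OF H])
  have \<Phi>m: "\<Phi>' \<in> haar ?I \<rightarrow>\<^sub>M borel_of ?X"
    unfolding \<Phi>'_def by (rule ext_meas[OF \<Phi>c one_torus])
  have gm: "g \<in> borel_measurable (borel_of ?X)" by (rule cont_meas[OF gc])
  have \<Phi>top: "\<Phi>' \<omega> \<in> topspace ?X" for \<omega>
    unfolding \<Phi>'_def topspace_H_top using Phi_carrier[OF H] one_torus by auto
  define f where "f = (\<lambda>\<omega>. g (\<Phi>' \<omega>))"
  have fm: "f \<in> borel_measurable borel"
  proof -
    have "f \<in> borel_measurable (haar ?I)" unfolding f_def by (rule measurable_compose[OF \<Phi>m gm])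
    then show ?thesis using measurable_cong_sets[OF sets_haar[of ?I] refl] by blast
  qed
  have fb: "\<bar>f \<omega>\<bar> \<le> B" for \<omega> unfolding f_def by (rule B[OF \<Phi>top])
  have fc: "continuous_on (torus ?I) f"
  proof -
    have "continuous_map (top_of_set (torus ?I)) euclideanreal (g \<circ> ?\<Phi>)"
      by (rule continuous_map_compose[OF \<Phi>c gc])
    then have "continuous_on (torus ?I) (g \<circ> ?\<Phi>)" by (simp add: continuous_map_iff_continuous)
    moreover have "\<And>\<omega>. \<omega> \<in> torus ?I \<Longrightarrow> (g \<circ> ?\<Phi>) \<omega> = f \<omega>" by (simp add: f_def \<Phi>'_def)
    ultimately show ?thesis using continuous_on_cong by blast
  qed
  have th: "\<theta> \<in> torus ?I" unfolding \<theta>_def by (rule base_torus[OF w1 w2])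
  have xt: "\<xi> \<in> torus ?I" unfolding \<xi>_def by (rule xi_torus)
  have al: "\<forall>j\<in>{1..r}. 0 < \<alpha> j" using H unfolding hyp_def by blast
  have Zk: "Z k = \<Phi>' (pt \<theta> \<xi> k)" for k
    unfolding Z_def shift_eq[OF al] \<Phi>'_def \<theta>_def \<xi>_def using pt_torus[OF th xt] \<theta>_def \<xi>_def by simp
  have lim: "cavg (\<lambda>k. f (pt \<theta> \<xi> k)) \<longlonglongrightarrow> integral\<^sup>L (haar ?I) f"
    by (rule weyl[OF th xt _ fm fb fc]) (simp add: nr \<xi>_def)
  have R: "integral\<^sup>L (distr (haar ?I) (borel_of ?X) \<Phi>') g = integral\<^sup>L (haar ?I) f"
    unfolding f_def by (rule integral_distr[OF \<Phi>m gm])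
  have L: "integral\<^sup>L (empirical ?X Z N) g = cavg (\<lambda>k. f (pt \<theta> \<xi> k)) N" for N
  proof -
    have Zm: "Z \<in> measure_pmf (pmf_of_set {0..N}) \<rightarrow>\<^sub>M borel_of ?X"
      unfolding measurable_pmf_measure1 space_borel_of using \<Phi>top Zk by auto
    have "integral\<^sup>L (empirical ?X Z N) g = integral\<^sup>L (measure_pmf (pmf_of_set {0..N})) (\<lambda>k. g (Z k))"
      unfolding empirical_def by (rule integral_distr[OF Zm gm])
    also have "\<dots> = (\<Sum>k\<in>{0..N}. g (Z k)) / real (card {0..N})"
      by (rule integral_pmf_of_set) auto
    also have "\<dots> = cavg (\<lambda>k. f (pt \<theta> \<xi> k)) N"
      unfolding cavg_def f_def Zk by simp
    finally show ?thesis .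
  qed
  show "(\<lambda>N. integral\<^sup>L (empirical ?X Z N) g) \<longlonglongrightarrow> integral\<^sup>L (distr (haar ?I) (borel_of ?X) \<Phi>') g"
    unfolding L R by (rule lim)
qed

theorem lemma3:
  fixes c :: "nat \<Rightarrow> complex" and F :: "complex \<Rightarrow> complex" and \<sigma>0 :: real
    and r :: nat and l :: "nat \<Rightarrow> nat" and \<alpha> :: "nat \<Rightarrow> real"
    and b :: "nat \<Rightarrow> nat \<Rightarrow> nat \<Rightarrow> complex"
    and h1 :: real and h2 :: "nat \<Rightarrow> real"
    and D1 D2 :: "complex set" and \<sigma>s :: real
    and \<omega>1 :: "nat \<Rightarrow> complex" and \<omega>2 :: "nat \<Rightarrow> nat \<Rightarrow> complex"
  assumes M: "classM c F \<sigma>0"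
    and r: "r \<ge> 1"
    and l: "\<forall>j\<in>{1..r}. l j \<ge> 1"
    and \<alpha>: "\<forall>j\<in>{1..r}. 0 < \<alpha> j \<and> \<alpha> j < 1"
    and b_per: "\<forall>(j, i)\<in>H_idx r l - {(0,0)}. \<exists>q>0. \<forall>m. b (m + q) j i = b m j i"
    and b_nz: "\<forall>(j, i)\<in>H_idx r l - {(0,0)}. \<exists>m. b m j i \<noteq> 0"
    and h: "h1 > 0" "\<forall>j\<in>{1..r}. h2 j > 0"
    and D1: "open D1" "D1 \<subseteq> {s. sigma_star c F \<sigma>0 < Re s \<and> Re s < 1}"
    and D2: "open D2" "D2 \<subseteq> {s. 1/2 < Re s \<and> Re s < 1}"
    and indep: "Q_lin_indep (L_fam h1 h2 \<alpha>) (L_index r)"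
    and \<sigma>s: "\<sigma>s > 1/2"
    and \<omega>1: "\<forall>p. prime p \<longrightarrow> cmod (\<omega>1 p) = 1"
    and \<omega>2: "\<forall>j\<in>{1..r}. \<forall>m. cmod (\<omega>2 j m) = 1"
  shows "\<forall>n\<ge>1. \<exists>P. prob_space P \<and> sets P = sets (borel_of (H_top r l D1 D2)) \<and>
     weak_conv_top (H_top r l D1 D2)
        (empirical (H_top r l D1 D2) (Zn_shift \<sigma>s c \<alpha> b h1 h2 r l D1 D2 n)) P \<and>
     weak_conv_top (H_top r l D1 D2)
        (empirical (H_top r l D1 D2) (Zn_shift_tw \<sigma>s c \<alpha> b h1 h2 r l D1 D2 \<omega>1 \<omega>2 n)) P"
proof (intro allI impI)
  fix n :: nat assume n: "n \<ge> 1"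
  let ?X = "H_top r l D1 D2"
  define \<Phi>' where "\<Phi>' = (\<lambda>\<omega>. if \<omega> \<in> torus (Idx r) then Phi \<sigma>s c \<alpha> b h1 h2 r l D1 D2 n \<omega>
              else Phi \<sigma>s c \<alpha> b h1 h2 r l D1 D2 n (\<lambda>_. 1))"
  have eps: "euler_product_shift c F" using M unfolding classM_def by blast
  have H: "hyp \<sigma>s c F b \<alpha> r l n"
    unfolding hyp_def using eps n \<sigma>s \<alpha> b_per by auto
  have nr: "nonres (Idx r) (xi h1 h2 \<alpha> r)" by (rule nonres_xi[OF indep])
  have \<Phi>c: "continuous_map (top_of_set (torus (Idx r))) ?X (Phi \<sigma>s c \<alpha> b h1 h2 r l D1 D2 n)"
    by (rule Phi_cont[OF H])
  have \<Phi>m: "\<Phi>' \<in> haar (Idx r) \<rightarrow>\<^sub>M borel_of ?X"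
    unfolding \<Phi>'_def by (rule ext_meas[OF \<Phi>c one_torus])
  show "\<exists>P. prob_space P \<and> sets P = sets (borel_of ?X) \<and>
     weak_conv_top ?X (empirical ?X (Zn_shift \<sigma>s c \<alpha> b h1 h2 r l D1 D2 n)) P \<and>
     weak_conv_top ?X (empirical ?X (Zn_shift_tw \<sigma>s c \<alpha> b h1 h2 r l D1 D2 \<omega>1 \<omega>2 n)) P"
  proof (intro exI conjI)
    show "prob_space (distr (haar (Idx r)) (borel_of ?X) \<Phi>')"
      by (rule prob_space.prob_space_distr[OF haar_prob \<Phi>m])
    show "sets (distr (haar (Idx r)) (borel_of ?X) \<Phi>') = sets (borel_of ?X)" by simp
    show "weak_conv_top ?X (empirical ?X (Zn_shift \<sigma>s c \<alpha> b h1 h2 r l D1 D2 n)) (distr (haar (Idx r)) (borel_of ?X) \<Phi>')"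
      unfolding Zn_untw \<Phi>'_def by (rule main_tw[OF H nr]) auto
    show "weak_conv_top ?X (empirical ?X (Zn_shift_tw \<sigma>s c \<alpha> b h1 h2 r l D1 D2 \<omega>1 \<omega>2 n)) (distr (haar (Idx r)) (borel_of ?X) \<Phi>')"
      unfolding \<Phi>'_def by (rule main_tw[OF H nr \<omega>1 \<omega>2])
  qed
qed

end
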